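(* Let $\mathcal N$ be a null structure on an oriented three-dimensional (pseudo-)Riemannian manifold $(\mathcal M,g)$ which at every point is a principal null structure of $\Phi_{ab}$ of multiplicity exactly $2$. Suppose that for a generator $k^a$ of $\mathcal N$, $$k^ak^b\left(A_{abc}+3g_{bc}\nabla_aS\right)=0.$$ Then $\mathcal N$ is co-geodetic.
   Context: Abstract index notation; $\nabla$ the Levi-Civita connection; brackets denote (skew-)symmetrisation with weight $1/2$. $R_{abd}{}^cV^d=2\nabla_{[a}\nabla_{b]}V^c$, $R_{ab}=R_{acb}{}^c$, $R=R_a{}^a$, $\Phi_{ab}=R_{ab}-\frac13Rg_{ab}$, $S=\frac1{12}R$, Cotton tensor $A_{abc}=-2\nabla_{[b}\Phi_{c]a}+2g_{a[b}\nabla_{c]}S$. $g,\nabla$ extended complex-(bi)linearly to $T^{\mathbb C}\mathcal M$. A null structure is a complex line subbundle $\mathcal N\subset T^{\mathbb C}\mathcal M$ with $g(k,k)=0$ for all sections; a generator is a nowhere-vanishing section; $\mathcal N^\perp$ its orthogonal complement. $\mathcal N$ is co-geodetic if $g(\nabla_XY,Z)=0$ for all sections $X,Y$ of $\mathcal N^\perp$, $Z$ of $\mathcal N$. Multiplicity: pick a frame $(k,\ell,n)$ with $g(k,\ell)=1$, $g(n,n)=-\frac12$, other pairings zero; $\Phi_0=\frac12\Phi_{ab}k^ak^b$, $\Phi_1=\frac12\Phi_{ab}k^an^b$, $\Phi_2=\frac12\Phi_{ab}k^a\ell^b$, $\Phi_3=\frac12\Phi_{ab}\ell^an^b$, $\Phi_4=\frac12\Phi_{ab}\ell^a\ell^b$;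 the multiplicity of $\mathcal N$ as principal null structure is the multiplicity of the root $z=0$ of $\Phi_0+4\Phi_1z+6\Phi_2z^2+4\Phi_3z^3+\Phi_4z^4$. Thus multiplicity exactly 2 means $\Phi_0=\Phi_1=0\neq\Phi_2$ (equivalently $k_{[a}\Phi_{b]c}k^c=0$ but $\Phi_{ab}k^b\neq0$). *)

theory Defs
  imports "HOL-Analysis.Analysis" "HOL-Computational_Algebra.Polynomial"
begin

text \<open>Local coordinate model: an open set U of R^3 (a coordinate chart of the
three-dimensional manifold), a metric given by a symmetric nondegenerate
matrix field G, complex vector fields as maps to complex^3.  Indices
range over the type 3.\<close>

definition pd :: "3 \<Rightarrow> (real^3 \<Rightarrow> 'b::real_normed_vector) \<Rightarrow> real^3 \<Rightarrow> 'b" where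
  "pd i f x = vector_derivative (\<lambda>t. f (x + t *\<^sub>R axis i 1)) (at 0)"

fun pds :: "3 list \<Rightarrow> (real^3 \<Rightarrow> 'b::real_normed_vector) \<Rightarrow> real^3 \<Rightarrow> 'b" where
  "pds [] f = f"
| "pds (i # is) f = pd i (pds is f)"

definition smooth_on :: "(real^3) set \<Rightarrow> (real^3 \<Rightarrow> 'b::real_normed_vector) \<Rightarrow> bool" where
  "smooth_on U f \<longleftrightarrow> (\<forall>is. \<forall>x\<in>U. pds is f differentiable (at x))"

definition smooth_metric :: "(real^3) set \<Rightarrow> (real^3 \<Rightarrow> real^3^3) \<Rightarrow> bool" where
  "smooth_metric U G \<longleftrightarrow> open U \<and>
     (\<forall>a b. smooth_on U (\<lambda>y. G y $ a $ b)) \<and>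
     (\<forall>x\<in>U. transpose (G x) = G x \<and> det (G x) \<noteq> 0)"

definition ginv :: "(real^3 \<Rightarrow> real^3^3) \<Rightarrow> real^3 \<Rightarrow> real^3^3" where
  "ginv G x = matrix_inv (G x)"

definition christ :: "(real^3 \<Rightarrow> real^3^3) \<Rightarrow> 3 \<Rightarrow> 3 \<Rightarrow> 3 \<Rightarrow> real^3 \<Rightarrow> real" where
  "christ G c a b x = (1/2) * (\<Sum>d\<in>UNIV. ginv G x $ c $ d *
      (pd a (\<lambda>y. G y $ d $ b) x + pd b (\<lambda>y. G y $ d $ a) x - pd d (\<lambda>y. G y $ a $ b) x))"

text \<open>R_{abd}^c with R_{abd}^c V^d = (nabla_a nabla_b - nabla_b nabla_a) V^c.\<close>
definition riem :: "(real^3 \<Rightarrow> real^3^3) \<Rightarrow> 3 \<Rightarrow> 3 \<Rightarrow> 3 \<Rightarrow> 3 \<Rightarrow> real^3 \<Rightarrow> real" where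
  "riem G a b d c x = pd a (christ G c b d) x - pd b (christ G c a d) x
     + (\<Sum>e\<in>UNIV. christ G c a e x * christ G e b d x - christ G c b e x * christ G e a d x)"

definition ricci :: "(real^3 \<Rightarrow> real^3^3) \<Rightarrow> 3 \<Rightarrow> 3 \<Rightarrow> real^3 \<Rightarrow> real" where
  "ricci G a b x = (\<Sum>c\<in>UNIV. riem G a c b c x)"

definition scal :: "(real^3 \<Rightarrow> real^3^3) \<Rightarrow> real^3 \<Rightarrow> real" where
  "scal G x = (\<Sum>a\<in>UNIV. \<Sum>b\<in>UNIV. ginv G x $ a $ b * ricci G a b x)"

definition Phi :: "(real^3 \<Rightarrow> real^3^3) \<Rightarrow> 3 \<Rightarrow> 3 \<Rightarrow> real^3 \<Rightarrow> real" where
  "Phi G a b x = ricci G a b x - (1/3) * scal G x * G x $ a $ b"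

definition Sfun :: "(real^3 \<Rightarrow> real^3^3) \<Rightarrow> real^3 \<Rightarrow> real" where
  "Sfun G x = scal G x / 12"

definition nablaPhi :: "(real^3 \<Rightarrow> real^3^3) \<Rightarrow> 3 \<Rightarrow> 3 \<Rightarrow> 3 \<Rightarrow> real^3 \<Rightarrow> real" where
  "nablaPhi G b c a x = pd b (Phi G c a) x
     - (\<Sum>e\<in>UNIV. christ G e b c x * Phi G e a x)
     - (\<Sum>e\<in>UNIV. christ G e b a x * Phi G c e x)"

definition cotton :: "(real^3 \<Rightarrow> real^3^3) \<Rightarrow> 3 \<Rightarrow> 3 \<Rightarrow> 3 \<Rightarrow> real^3 \<Rightarrow> real" where
  "cotton G a b c x = - (nablaPhi G b c a x - nablaPhi G c b a x)
     + G x $ a $ b * pd c (Sfun G) x - G x $ a $ c * pd b (Sfun G) x"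

definition gc :: "(real^3 \<Rightarrow> real^3^3) \<Rightarrow> real^3 \<Rightarrow> complex^3 \<Rightarrow> complex^3 \<Rightarrow> complex" where
  "gc G x u v = (\<Sum>a\<in>UNIV. \<Sum>b\<in>UNIV. complex_of_real (G x $ a $ b) * u $ a * v $ b)"

definition Phic :: "(real^3 \<Rightarrow> real^3^3) \<Rightarrow> real^3 \<Rightarrow> complex^3 \<Rightarrow> complex^3 \<Rightarrow> complex" where
  "Phic G x u v = (\<Sum>a\<in>UNIV. \<Sum>b\<in>UNIV. complex_of_real (Phi G a b x) * u $ a * v $ b)"

text \<open>The quartic Phi_0 + 4 Phi_1 z + 6 Phi_2 z^2 + 4 Phi_3 z^3 + Phi_4 z^4 w.r.t. frame (k,l,n).\<close>
definition phi_poly :: "(real^3 \<Rightarrow> real^3^3) \<Rightarrow> real^3 \<Rightarrow> complex^3 \<Rightarrow> complex^3 \<Rightarrow> complex^3 \<Rightarrow> complex poly" where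
  "phi_poly G x k l n =
     [: Phic G x k k / 2, 4 * (Phic G x k n / 2), 6 * (Phic G x k l / 2),
        4 * (Phic G x l n / 2), Phic G x l l / 2 :]"

definition null_frame :: "(real^3 \<Rightarrow> real^3^3) \<Rightarrow> real^3 \<Rightarrow> complex^3 \<Rightarrow> complex^3 \<Rightarrow> complex^3 \<Rightarrow> bool" where
  "null_frame G x k l n \<longleftrightarrow> gc G x k l = 1 \<and> gc G x n n = - 1/2 \<and>
     gc G x k k = 0 \<and> gc G x l l = 0 \<and> gc G x k n = 0 \<and> gc G x l n = 0"

definition principal_mult :: "(real^3 \<Rightarrow> real^3^3) \<Rightarrow> real^3 \<Rightarrow> complex^3 \<Rightarrow> nat \<Rightarrow> bool" where
  "principal_mult G x k m \<longleftrightarrow> (\<exists>l n. null_frame G x k l n \<and>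
     phi_poly G x k l n \<noteq> 0 \<and> order 0 (phi_poly G x k l n) = m)"

definition covD :: "(real^3 \<Rightarrow> real^3^3) \<Rightarrow> (real^3 \<Rightarrow> complex^3) \<Rightarrow> (real^3 \<Rightarrow> complex^3) \<Rightarrow> real^3 \<Rightarrow> complex^3" where
  "covD G X Y x = (\<chi> c. \<Sum>a\<in>UNIV. X x $ a *
      (pd a (\<lambda>y. Y y $ c) x + (\<Sum>b\<in>UNIV. complex_of_real (christ G c a b x) * Y x $ b)))"

definition smooth_field :: "(real^3) set \<Rightarrow> (real^3 \<Rightarrow> complex^3) \<Rightarrow> bool" where
  "smooth_field U X \<longleftrightarrow> (\<forall>a. smooth_on U (\<lambda>y. X y $ a))"

text \<open>A null structure given by a smooth nowhere-vanishing null generator k.\<close>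
definition null_generator :: "(real^3) set \<Rightarrow> (real^3 \<Rightarrow> real^3^3) \<Rightarrow> (real^3 \<Rightarrow> complex^3) \<Rightarrow> bool" where
  "null_generator U G k \<longleftrightarrow> smooth_field U k \<and>
     (\<forall>x\<in>U. k x \<noteq> 0 \<and> gc G x (k x) (k x) = 0)"

definition co_geodetic :: "(real^3) set \<Rightarrow> (real^3 \<Rightarrow> real^3^3) \<Rightarrow> (real^3 \<Rightarrow> complex^3) \<Rightarrow> bool" where
  "co_geodetic U G k \<longleftrightarrow> (\<forall>X Y Z. smooth_field U X \<and> smooth_field U Y \<and> smooth_field U Z \<and>
      (\<forall>x\<in>U. gc G x (X x) (k x) = 0 \<and> gc G x (Y x) (k x) = 0 \<and> (\<exists>c. Z x = c *s k x))
      \<longrightarrow> (\<forall>x\<in>U. gc G x (covD G X Y x) (Z x) = 0))"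

end

theory Submission
  imports Defs
begin

lemma pd_line:
  assumes "(f has_derivative D) (at (x + t *\<^sub>R v))"
  shows "((\<lambda>s. f (x + s *\<^sub>R v)) has_vector_derivative D v) (at t)"
proof -
  have "((\<lambda>s. x + s *\<^sub>R v) has_derivative (\<lambda>s. s *\<^sub>R v)) (at t)"
    by (auto intro!: derivative_eq_intros)
  from has_derivative_compose[OF this assms] have
    "((\<lambda>s. f (x + s *\<^sub>R v)) has_derivative (\<lambda>s. D (s *\<^sub>R v))) (at t)" by simp
  moreover have "linear D" using assms has_derivative_linear by blast
  ultimately show ?thesis unfolding has_vector_derivative_def
    by (simp add: linear_scale)
qed

lemma pd_has_derivative:
  assumes "(f has_derivative D) (at x)"
  shows "pd i f x = D (axis i 1)"
  unfolding pd_def using pd_line[of f D x 0 "axis i 1"] assms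
  by (simp add: vector_derivative_at)

lemma pd_frechet:
  assumes "f differentiable (at x)"
  shows "pd i f x = frechet_derivative f (at x) (axis i 1)"
  using assms pd_has_derivative frechet_derivative_works by blast

lemma pd_add:
  assumes "f differentiable (at x)" "g differentiable (at x)"
  shows "pd i (\<lambda>y. f y + g y) x = pd i f x + pd i g x"
proof -
  from assms obtain Df Dg where "(f has_derivative Df) (at x)" "(g has_derivative Dg) (at x)"
    unfolding differentiable_def by blast
  note d = this
  show ?thesis using pd_has_derivative[OF has_derivative_add[OF d], of i]
    pd_has_derivative[OF d(1), of i] pd_has_derivative[OF d(2), of i] by simp
qed

lemma pd_diff:
  assumes "f differentiable (at x)" "g differentiable (at x)"
  shows "pd i (\<lambda>y. f y - g y) x = pd i f x - pd i g x"
proof -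
  from assms obtain Df Dg where "(f has_derivative Df) (at x)" "(g has_derivative Dg) (at x)"
    unfolding differentiable_def by blast
  note d = this
  show ?thesis using pd_has_derivative[OF has_derivative_diff[OF d], of i]
    pd_has_derivative[OF d(1), of i] pd_has_derivative[OF d(2), of i] by simp
qed

lemma pd_minus:
  assumes "f differentiable (at x)"
  shows "pd i (\<lambda>y. - f y) x = - pd i f x"
proof -
  from assms obtain Df where "(f has_derivative Df) (at x)"
    unfolding differentiable_def by blast
  note d = this
  show ?thesis using pd_has_derivative[OF has_derivative_minus[OF d], of i]
    pd_has_derivative[OF d, of i] by simp
qed

lemma pd_mult:
  fixes f g :: "real^3 \<Rightarrow> 'b::real_normed_algebra"
  assumes "f differentiable (at x)" "g differentiable (at x)"
  shows "pd i (\<lambda>y. f y * g y) x = f x * pd i g x + pd i f x * g x"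
proof -
  from assms obtain Df Dg where "(f has_derivative Df) (at x)" "(g has_derivative Dg) (at x)"
    unfolding differentiable_def by blast
  note d = this
  show ?thesis using pd_has_derivative[OF has_derivative_mult[OF d], of i]
    pd_has_derivative[OF d(1), of i] pd_has_derivative[OF d(2), of i] by simp
qed

lemma pd_const: "pd i (\<lambda>y. c) x = 0"
  using pd_has_derivative[OF has_derivative_const[of c "at x"], of i] by simp

lemma pd_sum:
  assumes "finite A" "\<And>a. a \<in> A \<Longrightarrow> f a differentiable (at x)"
  shows "pd i (\<lambda>y. \<Sum>a\<in>A. f a y) x = (\<Sum>a\<in>A. pd i (f a) x)"
proof -
  have "(f a has_derivative frechet_derivative (f a) (at x)) (at x)" if "a \<in> A" for a
    using assms(2)[OF that] frechet_derivative_works by blast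
  then have "((\<lambda>y. \<Sum>a\<in>A. f a y) has_derivative (\<lambda>h. \<Sum>a\<in>A. frechet_derivative (f a) (at x) h)) (at x)"
    by (rule has_derivative_sum)
  from pd_has_derivative[OF this] show ?thesis
    using pd_frechet assms(2) by (metis (no_types, lifting) sum.cong)
qed

lemma pd_of_real:
  assumes "f differentiable (at x)"
  shows "pd i (\<lambda>y. of_real (f y) :: 'b::real_normed_algebra_1) x = of_real (pd i f x)"
proof -
  from assms obtain Df where D: "(f has_derivative Df) (at x)"
    unfolding differentiable_def by blast
  have D2: "((\<lambda>y. of_real (f y) :: 'b) has_derivative (\<lambda>h. of_real (Df h))) (at x)"
    using bounded_linear.has_derivative[OF bounded_linear_of_real D] .
  show ?thesis using pd_has_derivative[OF D, of i] pd_has_derivative[OF D2, of i] by simp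
qed

lemma pd_cong:
  assumes "open U" "x \<in> U" "\<And>y. y \<in> U \<Longrightarrow> f y = g y"
  shows "pd i f x = pd i g x"
proof -
  let ?S = "{t::real. x + t *\<^sub>R axis i 1 \<in> U}"
  have oS: "open ?S"
  proof -
    have "continuous_on UNIV (\<lambda>t::real. x + t *\<^sub>R axis i 1)" by (intro continuous_intros)
    from open_vimage[OF assms(1) this] show ?thesis by (simp add: vimage_def)
  qed
  have S0: "0 \<in> ?S" using assms(2) by simp
  have "(\<lambda>D. ((\<lambda>t. f (x + t *\<^sub>R axis i 1)) has_vector_derivative D) (at 0)) =
        (\<lambda>D. ((\<lambda>t. g (x + t *\<^sub>R axis i 1)) has_vector_derivative D) (at 0))"
  proof (rule ext, rule iffI)
    fix D assume "((\<lambda>t. f (x + t *\<^sub>R axis i 1)) has_vector_derivative D) (at 0)"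
    then show "((\<lambda>t. g (x + t *\<^sub>R axis i 1)) has_vector_derivative D) (at 0)"
      by (rule has_vector_derivative_transform_within_open[OF _ oS S0]) (use assms(3) in auto)
  next
    fix D assume "((\<lambda>t. g (x + t *\<^sub>R axis i 1)) has_vector_derivative D) (at 0)"
    then show "((\<lambda>t. f (x + t *\<^sub>R axis i 1)) has_vector_derivative D) (at 0)"
      by (rule has_vector_derivative_transform_within_open[OF _ oS S0]) (use assms(3) in auto)
  qed
  then show ?thesis unfolding pd_def vector_derivative_def by (rule arg_cong)
qed

lemma differentiable_cong:
  assumes "open U" "x \<in> U" "\<And>y. y \<in> U \<Longrightarrow> f y = g y" "f differentiable (at x)"
  shows "g differentiable (at x)"
  using assms has_derivative_transform_within_open unfolding differentiable_def by blast

lemma pds_cong: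
  assumes "open U" "\<And>y. y \<in> U \<Longrightarrow> f y = g y"
  shows "y \<in> U \<Longrightarrow> pds is f y = pds is g y"
proof (induction "is" arbitrary: y)
  case Nil then show ?case using assms by simp
next
  case (Cons i "is") then show ?case using pd_cong[OF assms(1) Cons.prems, of "pds is f" "pds is g"] by simp
qed

lemma pds_snoc: "pds (is @ [i]) f = pds is (pd i f)"
  by (induction "is") auto


definition Ck :: "nat \<Rightarrow> (real^3) set \<Rightarrow> (real^3 \<Rightarrow> 'b::real_normed_vector) \<Rightarrow> bool" where
  "Ck n U f \<longleftrightarrow> (\<forall>is. length is \<le> n \<longrightarrow> (\<forall>x\<in>U. pds is f differentiable (at x)))"

lemma smooth_Ck: "smooth_on U f \<longleftrightarrow> (\<forall>n. Ck n U f)"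
  unfolding smooth_on_def Ck_def by auto

lemma Ck_0: "Ck 0 U f \<longleftrightarrow> (\<forall>x\<in>U. f differentiable (at x))"
  unfolding Ck_def by auto

lemma Ck_mono: "Ck n U f \<Longrightarrow> m \<le> n \<Longrightarrow> Ck m U f"
  unfolding Ck_def by auto

lemma Ck_Suc: "Ck (Suc n) U f \<longleftrightarrow> Ck 0 U f \<and> (\<forall>i. Ck n U (pd i f))"
proof
  assume A: "Ck (Suc n) U f"
  show "Ck 0 U f \<and> (\<forall>i. Ck n U (pd i f))"
  proof
    show "Ck 0 U f" using A Ck_mono by blast
    show "\<forall>i. Ck n U (pd i f)"
    proof (intro allI, unfold Ck_def, intro allI impI)
      fix i "is" assume "length (is::3 list) \<le> n"
      then have "length (is @ [i]) \<le> Suc n" by simp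
      then show "\<forall>x\<in>U. pds is (pd i f) differentiable at x"
        using A unfolding Ck_def pds_snoc[symmetric] by blast
    qed
  qed
next
  assume B: "Ck 0 U f \<and> (\<forall>i. Ck n U (pd i f))"
  show "Ck (Suc n) U f" unfolding Ck_def
  proof (intro allI impI)
    fix "is" assume L: "length (is::3 list) \<le> Suc n"
    show "\<forall>x\<in>U. pds is f differentiable at x"
    proof (cases "is = []")
      case True then show ?thesis using B by (simp add: Ck_0)
    next
      case False
      then have e: "is = butlast is @ [last is]" by simp
      have "length (butlast is) \<le> n" using L by simp
      then have "\<forall>x\<in>U. pds (butlast is) (pd (last is) f) differentiable at x"
        using B unfolding Ck_def by blast
      then show ?thesis by (subst e) (simp only: pds_snoc)
    qed
  qed
qed

lemma Ck_cong:
  assumes "open U" "\<And>y. y \<in> U \<Longrightarrow> f y = g y" "Ck n U f"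
  shows "Ck n U g"
  unfolding Ck_def
proof (intro allI impI ballI)
  fix "is" x assume "length (is::3 list) \<le> n" "x \<in> U"
  then have "pds is f differentiable at x" using assms(3) unfolding Ck_def by blast
  then show "pds is g differentiable at x"
    by (rule differentiable_cong[OF assms(1) \<open>x \<in> U\<close>, rotated])
       (rule pds_cong[OF assms(1,2)])
qed

lemma Ck_const: "Ck n U (\<lambda>y. c)"
proof (induction n arbitrary: c)
  case 0 then show ?case by (simp add: Ck_0)
next
  case (Suc n)
  have "pd i (\<lambda>y. c) = (\<lambda>y. 0)" for i by (rule ext) (rule pd_const)
  then show ?case unfolding Ck_Suc[of n] using Suc by (simp add: Ck_0)
qed

lemma Ck_add:
  assumes "open U" shows "Ck n U f \<Longrightarrow> Ck n U g \<Longrightarrow> Ck n U (\<lambda>y. f y + g y)"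
proof (induction n arbitrary: f g)
  case 0 then show ?case by (simp add: Ck_0)
next
  case (Suc n)
  have d: "\<forall>x\<in>U. f differentiable at x" "\<forall>x\<in>U. g differentiable at x"
    using Suc.prems by (auto simp: Ck_Suc Ck_0)
  have "Ck n U (pd i (\<lambda>y. f y + g y))" for i
  proof -
    have "Ck n U (\<lambda>y. pd i f y + pd i g y)" using Suc by (simp add: Ck_Suc)
    then show ?thesis
      by (rule Ck_cong[OF assms, rotated]) (simp add: pd_add d[rule_format])
  qed
  then show ?case using d by (simp add: Ck_Suc Ck_0)
qed

lemma Ck_minus:
  assumes "open U" shows "Ck n U f \<Longrightarrow> Ck n U (\<lambda>y. - f y)"
proof (induction n arbitrary: f)
  case 0 then show ?case by (simp add: Ck_0)
next
  case (Suc n)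
  have d: "\<forall>x\<in>U. f differentiable at x"
    using Suc.prems by (auto simp: Ck_Suc Ck_0)
  have "Ck n U (pd i (\<lambda>y. - f y))" for i
  proof -
    have "Ck n U (\<lambda>y. - pd i f y)" using Suc by (simp add: Ck_Suc)
    then show ?thesis
      by (rule Ck_cong[OF assms, rotated]) (simp add: pd_minus d[rule_format])
  qed
  then show ?case using d by (simp add: Ck_Suc Ck_0)
qed

lemma Ck_diff:
  assumes "open U" "Ck n U f" "Ck n U g" shows "Ck n U (\<lambda>y. f y - g y)"
  using Ck_add[OF assms(1,2) Ck_minus[OF assms(1,3)]] by simp

lemma Ck_mult:
  fixes f g :: "real^3 \<Rightarrow> 'b::real_normed_algebra"
  assumes "open U" shows "Ck n U f \<Longrightarrow> Ck n U g \<Longrightarrow> Ck n U (\<lambda>y. f y * g y)"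
proof (induction n arbitrary: f g)
  case 0 then show ?case by (simp add: Ck_0)
next
  case (Suc n)
  have d: "\<forall>x\<in>U. f differentiable at x" "\<forall>x\<in>U. g differentiable at x"
    using Suc.prems by (auto simp: Ck_Suc Ck_0)
  have "Ck n U (pd i (\<lambda>y. f y * g y))" for i
  proof -
    have f: "Ck n U f" "Ck n U g" using Ck_mono[OF Suc.prems(1), of n] Ck_mono[OF Suc.prems(2), of n] by auto
    have "Ck n U (\<lambda>y. f y * pd i g y)" "Ck n U (\<lambda>y. pd i f y * g y)"
      using Suc.IH f Suc.prems by (auto simp: Ck_Suc)
    then have "Ck n U (\<lambda>y. f y * pd i g y + pd i f y * g y)" by (rule Ck_add[OF assms])
    then show ?thesis
      by (rule Ck_cong[OF assms, rotated]) (simp add: pd_mult d[rule_format])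
  qed
  then show ?case using d by (simp add: Ck_Suc Ck_0)
qed

lemma Ck_inverse:
  fixes f :: "real^3 \<Rightarrow> 'b::real_normed_field"
  assumes "open U" shows "Ck n U f \<Longrightarrow> (\<forall>y\<in>U. f y \<noteq> 0) \<Longrightarrow> Ck n U (\<lambda>y. inverse (f y))"
proof (induction n arbitrary: f)
  case 0 then show ?case by (simp add: Ck_0)
next
  case (Suc n)
  have d: "\<forall>x\<in>U. f differentiable at x"
    using Suc.prems by (auto simp: Ck_Suc Ck_0)
  have pdinv: "pd i (\<lambda>y. inverse (f y)) y = - (pd i f y * (inverse (f y) * inverse (f y)))"
    if "y \<in> U" for i y
  proof -
    from d that obtain Df where D: "(f has_derivative Df) (at y)"
      unfolding differentiable_def by blast
    show ?thesis using pd_has_derivative[OF Deriv.has_derivative_inverse[OF _ D], of i]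
       pd_has_derivative[OF D, of i] Suc.prems(2) that by (simp add: field_simps)
  qed
  have "Ck n U (pd i (\<lambda>y. inverse (f y)))" for i
  proof -
    have f: "Ck n U f" using Ck_mono[OF Suc.prems(1), of n] by auto
    have iv: "Ck n U (\<lambda>y. inverse (f y))" using Suc.IH f Suc.prems by auto
    have "Ck n U (\<lambda>y. - (pd i f y * (inverse (f y) * inverse (f y))))"
      using Suc.prems by (intro Ck_minus[OF assms] Ck_mult[OF assms] iv) (auto simp: Ck_Suc)
    then show ?thesis
      by (rule Ck_cong[OF assms, rotated]) (use pdinv in auto)
  qed
  moreover have "\<forall>x\<in>U. (\<lambda>y. inverse (f y)) differentiable at x"
    using d Suc.prems(2) by auto
  ultimately show ?case by (simp add: Ck_Suc Ck_0)
qed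

lemma Ck_sum:
  assumes "open U" "finite A" shows "(\<And>a. a \<in> A \<Longrightarrow> Ck n U (f a)) \<Longrightarrow> Ck n U (\<lambda>y. \<Sum>a\<in>A. f a y)"
  using assms(2)
proof (induction A rule: finite_induct)
  case empty then show ?case using Ck_const by simp
next
  case (insert a A)
  then show ?case by (simp add: Ck_add[OF assms(1)])
qed

lemma Ck_pd: "Ck (Suc n) U f \<Longrightarrow> Ck n U (pd i f)"
  by (simp add: Ck_Suc)

lemma Ck_diffble: "Ck n U f \<Longrightarrow> x \<in> U \<Longrightarrow> f differentiable (at x)"
  unfolding Ck_def by (drule spec[of _ "[]"]) simp

lemma smooth_const: "smooth_on U (\<lambda>y. c)"
  by (simp add: smooth_Ck Ck_const)
lemma smooth_add: "open U \<Longrightarrow> smooth_on U f \<Longrightarrow> smooth_on U g \<Longrightarrow> smooth_on U (\<lambda>y. f y + g y)"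
  by (simp add: smooth_Ck Ck_add)
lemma smooth_minus: "open U \<Longrightarrow> smooth_on U f \<Longrightarrow> smooth_on U (\<lambda>y. - f y)"
  by (simp add: smooth_Ck Ck_minus)
lemma smooth_diff: "open U \<Longrightarrow> smooth_on U f \<Longrightarrow> smooth_on U g \<Longrightarrow> smooth_on U (\<lambda>y. f y - g y)"
  by (simp add: smooth_Ck Ck_diff)
lemma smooth_mult: "open U \<Longrightarrow> smooth_on U f \<Longrightarrow> smooth_on U g \<Longrightarrow> smooth_on U (\<lambda>y. f y * g y :: 'b::real_normed_algebra)"
  by (simp add: smooth_Ck Ck_mult)
lemma smooth_inverse: "open U \<Longrightarrow> smooth_on U f \<Longrightarrow> \<forall>y\<in>U. f y \<noteq> 0 \<Longrightarrow> smooth_on U (\<lambda>y. inverse (f y) :: 'b::real_normed_field)"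
  by (simp add: smooth_Ck Ck_inverse)
lemma smooth_sum: "open U \<Longrightarrow> finite A \<Longrightarrow> (\<And>a. a \<in> A \<Longrightarrow> smooth_on U (f a)) \<Longrightarrow> smooth_on U (\<lambda>y. \<Sum>a\<in>A. f a y)"
  by (simp add: smooth_Ck Ck_sum)
lemma smooth_pd: "smooth_on U f \<Longrightarrow> smooth_on U (pd i f)"
  unfolding smooth_Ck using Ck_pd by blast
lemma smooth_diffble: "smooth_on U f \<Longrightarrow> x \<in> U \<Longrightarrow> f differentiable (at x)"
  unfolding smooth_Ck using Ck_diffble by blast
lemma smooth_cong: "open U \<Longrightarrow> (\<And>y. y \<in> U \<Longrightarrow> f y = g y) \<Longrightarrow> smooth_on U f \<Longrightarrow> smooth_on U g"
  unfolding smooth_Ck using Ck_cong by blast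


lemma pd_line_deriv:
  fixes f :: "real^3 \<Rightarrow> real"
  assumes "f differentiable (at (y + t *\<^sub>R axis i 1))"
  shows "((\<lambda>s. f (y + s *\<^sub>R axis i 1)) has_real_derivative pd i f (y + t *\<^sub>R axis i 1)) (at t)"
proof -
  have D: "(f has_derivative frechet_derivative f (at (y + t *\<^sub>R axis i 1))) (at (y + t *\<^sub>R axis i 1))"
    using assms frechet_derivative_works by blast
  show ?thesis
    using pd_line[OF D] pd_frechet[OF assms, of i]
    by (simp add: has_real_derivative_iff_has_vector_derivative)
qed

lemma schwarz_half:
  fixes f :: "real^3 \<Rightarrow> real"
  assumes U: "open U" "x \<in> U" and df: "\<And>y. y \<in> U \<Longrightarrow> f differentiable (at y)"
    and dpsi: "pd i f differentiable (at x)" and e: "e > 0"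
  shows "\<exists>d>0. \<forall>h. 0 < h \<and> h < d \<longrightarrow>
     \<bar>(f (x + h *\<^sub>R axis j 1 + h *\<^sub>R axis i 1) - f (x + h *\<^sub>R axis i 1) - f (x + h *\<^sub>R axis j 1) + f x)
        - h^2 * pd j (pd i f) x\<bar> \<le> e * h^2"
proof -
  define \<psi> where "\<psi> = pd i f"
  define D where "D = frechet_derivative \<psi> (at x)"
  have Dd: "(\<psi> has_derivative D) (at x)" using dpsi frechet_derivative_works unfolding D_def \<psi>_def by blast
  have lin: "linear D" using Dd has_derivative_linear by blast
  obtain \<delta> where \<delta>: "\<delta> > 0" "\<And>y. norm (y - x) < \<delta> \<Longrightarrow> norm (\<psi> y - \<psi> x - D (y - x)) \<le> (e/3) * norm (y - x)"
    using Dd e unfolding has_derivative_at_alt by (meson divide_pos_pos zero_less_numeral)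
  obtain r where r: "r > 0" "ball x r \<subseteq> U" using U open_contains_ball by blast
  define d where "d = min \<delta> r / 2"
  have "d > 0" using \<delta> r by (simp add: d_def)
  moreover have "\<bar>(f (x + h *\<^sub>R axis j 1 + h *\<^sub>R axis i 1) - f (x + h *\<^sub>R axis i 1) - f (x + h *\<^sub>R axis j 1) + f x)
        - h^2 * pd j (pd i f) x\<bar> \<le> e * h^2" if h: "0 < h" "h < d" for h
  proof -
    define y where "y = x + h *\<^sub>R axis j 1"
    define \<phi> where "\<phi> t = f (y + t *\<^sub>R axis i 1) - f (x + t *\<^sub>R axis i 1)" for t
    have n1: "norm (y + t *\<^sub>R axis i 1 - x) \<le> 2 * h" if "0 \<le> t" "t \<le> h" for t
    proof -
      have "y + t *\<^sub>R axis i 1 - x = h *\<^sub>R axis j 1 + t *\<^sub>R axis i 1" by (simp add: y_def algebra_simps)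
      then have "norm (y + t *\<^sub>R axis i 1 - x) = norm (h *\<^sub>R axis j 1 + t *\<^sub>R (axis i 1 :: real^3))" by (simp only:)
      also have "\<dots> \<le> norm (h *\<^sub>R (axis j 1 :: real^3)) + norm (t *\<^sub>R (axis i 1 :: real^3))" by (rule norm_triangle_ineq)
      also have "\<dots> = h + t" using that h by (simp add: norm_axis_1)
      finally show ?thesis using that by simp
    qed
    have n2: "norm (x + t *\<^sub>R axis i 1 - x) \<le> h" if "0 \<le> t" "t \<le> h" for t
      using that by (simp add: norm_axis_1)
    have inU: "z \<in> U" if "norm (z - x) \<le> 2 * h" for z
    proof -
      have "dist x z < r" using that h by (simp add: dist_norm norm_minus_commute d_def)
      then show ?thesis using r by auto
    qed
    have der: "(\<phi> has_real_derivative (\<psi> (y + t *\<^sub>R axis i 1) - \<psi> (x + t *\<^sub>R axis i 1))) (at t)"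
      if "0 \<le> t" "t \<le> h" for t
    proof -
      have "y + t *\<^sub>R axis i 1 \<in> U" "x + t *\<^sub>R axis i 1 \<in> U"
        using inU n1[OF that] n2[OF that] h by auto
      then show ?thesis unfolding \<phi>_def[abs_def] \<psi>_def
        by (intro derivative_intros pd_line_deriv df)
    qed
    obtain z where z: "0 < z" "z < h"
      "\<phi> h - \<phi> 0 = (h - 0) * (\<psi> (y + z *\<^sub>R axis i 1) - \<psi> (x + z *\<^sub>R axis i 1))"
      using MVT2[OF h(1), of \<phi> "\<lambda>t. \<psi> (y + t *\<^sub>R axis i 1) - \<psi> (x + t *\<^sub>R axis i 1)"] der by auto
    define p1 where "p1 = y + z *\<^sub>R axis i 1"
    define p2 where "p2 = x + z *\<^sub>R axis i 1"
    have np1: "norm (p1 - x) \<le> 2 * h" using n1[of z] z unfolding p1_def by auto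
    have np2: "norm (p2 - x) \<le> h" using n2[of z] z unfolding p2_def by auto
    have e1: "norm (\<psi> p1 - \<psi> x - D (p1 - x)) \<le> (e/3) * (2*h)"
    proof -
      have "norm (p1 - x) < \<delta>" using np1 h by (simp add: d_def)
      then have "norm (\<psi> p1 - \<psi> x - D (p1 - x)) \<le> (e/3) * norm (p1 - x)" by (rule \<delta>(2))
      also have "\<dots> \<le> (e/3) * (2*h)" using np1 e by (intro mult_left_mono) auto
      finally show ?thesis .
    qed
    have e2: "norm (\<psi> p2 - \<psi> x - D (p2 - x)) \<le> (e/3) * h"
    proof -
      have "norm (p2 - x) < \<delta>" using np2 h by (simp add: d_def)
      then have "norm (\<psi> p2 - \<psi> x - D (p2 - x)) \<le> (e/3) * norm (p2 - x)" by (rule \<delta>(2))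
      also have "\<dots> \<le> (e/3) * h" using np2 e by (intro mult_left_mono) auto
      finally show ?thesis .
    qed
    have "D (p1 - x) - D (p2 - x) = D (p1 - p2)" using lin by (simp add: linear_diff)
    also have "p1 - p2 = h *\<^sub>R axis j 1" by (simp add: p1_def p2_def y_def)
    also have "D (h *\<^sub>R axis j 1) = h * D (axis j 1)" using lin by (simp add: linear_scale)
    finally have Dd2: "D (p1 - x) - D (p2 - x) = h * D (axis j 1)" .
    have pdj: "pd j (pd i f) x = D (axis j 1)"
      using pd_frechet[OF dpsi, of j] unfolding D_def \<psi>_def by simp
    have "\<bar>\<psi> p1 - \<psi> p2 - h * D (axis j 1)\<bar> \<le> e * h"
    proof -
      have "\<psi> p1 - \<psi> p2 - h * D (axis j 1) = (\<psi> p1 - \<psi> x - D (p1 - x)) - (\<psi> p2 - \<psi> x - D (p2 - x))"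
        using Dd2 by simp
      then have "\<bar>\<psi> p1 - \<psi> p2 - h * D (axis j 1)\<bar> \<le> \<bar>\<psi> p1 - \<psi> x - D (p1 - x)\<bar> + \<bar>\<psi> p2 - \<psi> x - D (p2 - x)\<bar>"
        by simp
      also have "\<dots> \<le> (e/3) * (2*h) + (e/3) * h" using e1 e2 by simp
      finally show ?thesis by simp
    qed
    moreover have "(f (x + h *\<^sub>R axis j 1 + h *\<^sub>R axis i 1) - f (x + h *\<^sub>R axis i 1) - f (x + h *\<^sub>R axis j 1) + f x)
        - h^2 * pd j (pd i f) x = h * (\<psi> p1 - \<psi> p2 - h * D (axis j 1))"
      using z(3) unfolding pdj \<phi>_def p1_def p2_def y_def by (simp add: power2_eq_square algebra_simps)
    ultimately show ?thesis using h
      by (simp add: abs_mult power2_eq_square mult_left_mono mult.assoc[symmetric])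
  qed
  ultimately show ?thesis by blast
qed

lemma schwarz:
  fixes f :: "real^3 \<Rightarrow> real"
  assumes U: "open U" "x \<in> U" and C: "Ck 2 U f"
  shows "pd i (pd j f) x = pd j (pd i f) x"
proof -
  have df: "\<And>y. y \<in> U \<Longrightarrow> f differentiable (at y)" using C Ck_diffble by blast
  have di: "pd i f differentiable (at x)" "pd j f differentiable (at x)"
    using C U(2) by (auto simp: numeral_2_eq_2 Ck_Suc Ck_0)
  let ?A = "pd j (pd i f) x" and ?B = "pd i (pd j f) x"
  have "\<bar>?A - ?B\<bar> \<le> 2 * e" if e: "e > 0" for e
  proof -
    obtain d1 where d1: "d1 > 0" "\<forall>h. 0 < h \<and> h < d1 \<longrightarrow>
     \<bar>(f (x + h *\<^sub>R axis j 1 + h *\<^sub>R axis i 1) - f (x + h *\<^sub>R axis i 1) - f (x + h *\<^sub>R axis j 1) + f x)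
        - h^2 * ?A\<bar> \<le> e * h^2"
      using schwarz_half[OF U df di(1) e, of j] by blast
    obtain d2 where d2: "d2 > 0" "\<forall>h. 0 < h \<and> h < d2 \<longrightarrow>
     \<bar>(f (x + h *\<^sub>R axis i 1 + h *\<^sub>R axis j 1) - f (x + h *\<^sub>R axis j 1) - f (x + h *\<^sub>R axis i 1) + f x)
        - h^2 * ?B\<bar> \<le> e * h^2"
      using schwarz_half[OF U df di(2) e, of i] by blast
    define h where "h = min d1 d2 / 2"
    have h: "0 < h" "h < d1" "h < d2" using d1 d2 by (auto simp: h_def)
    have eq: "x + h *\<^sub>R axis i 1 + h *\<^sub>R axis j 1 = x + h *\<^sub>R axis j 1 + h *\<^sub>R axis i 1"
      by (simp add: algebra_simps)
    define \<Delta> where "\<Delta> = f (x + h *\<^sub>R axis j 1 + h *\<^sub>R axis i 1) - f (x + h *\<^sub>R axis i 1) - f (x + h *\<^sub>R axis j 1) + f x"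
    have a: "\<bar>\<Delta> - h^2 * ?A\<bar> \<le> e * h^2" using d1(2) h unfolding \<Delta>_def by blast
    have b: "\<bar>\<Delta> - h^2 * ?B\<bar> \<le> e * h^2" using d2(2) h unfolding \<Delta>_def eq by (simp add: algebra_simps)
    have "(\<Delta> - h^2 * ?B) - (\<Delta> - h^2 * ?A) = h^2 * (?A - ?B)" by (simp add: algebra_simps)
    then have "h^2 * \<bar>?A - ?B\<bar> = \<bar>(\<Delta> - h^2 * ?B) - (\<Delta> - h^2 * ?A)\<bar>"
      by (simp add: abs_mult)
    also have "\<dots> \<le> \<bar>\<Delta> - h^2 * ?B\<bar> + \<bar>\<Delta> - h^2 * ?A\<bar>" by (rule abs_triangle_ineq4)
    also have "\<dots> \<le> h^2 * (2 * e)"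
    proof -
      have "h^2 * (2 * e) = e * h^2 + e * h^2" by simp
      then show ?thesis using a b by linarith
    qed
    finally show ?thesis using h by simp
  qed
  then have "?A = ?B"
  proof -
    assume H: "\<And>e. e > 0 \<Longrightarrow> \<bar>?A - ?B\<bar> \<le> 2 * e"
    show ?thesis
    proof (rule ccontr)
      assume "?A \<noteq> ?B"
      then have "\<bar>?A - ?B\<bar> / 4 > 0" by simp
      from H[OF this] show False using \<open>?A \<noteq> ?B\<close> by simp
    qed
  qed
  then show ?thesis by simp
qed


definition nx :: "3 \<Rightarrow> 3" where "nx i = (if i = 1 then 2 else if i = 2 then 3 else 1)"
definition adjE :: "real^3^3 \<Rightarrow> 3 \<Rightarrow> 3 \<Rightarrow> real" where
  "adjE A i j = A$(nx j)$(nx i) * A$(nx (nx j))$(nx (nx i)) - A$(nx j)$(nx (nx i)) * A$(nx (nx j))$(nx i)"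

lemma nx_simps [simp]: "nx 1 = 2" "nx 2 = 3" "nx 3 = 1"
  by (auto simp: nx_def)

lemma adj_right: "(\<Sum>k\<in>UNIV. A$i$k * adjE A k j) = (if i = j then det A else 0)"
  using exhaust_3[of i] exhaust_3[of j]
  by (auto simp: adjE_def sum_3 det_3 algebra_simps)

lemma adj_left: "(\<Sum>k\<in>UNIV. adjE A i k * A$k$j) = (if i = j then det A else 0)"
  using exhaust_3[of i] exhaust_3[of j]
  by (auto simp: adjE_def sum_3 det_3 algebra_simps)

lemma inv3:
  assumes "det A \<noteq> 0"
  shows "matrix_inv A $ i $ j = adjE A i j / det A"
proof -
  define B where "B = (\<chi> i j. adjE A i j / det A)"
  have AB: "A ** B = mat 1"
    unfolding B_def matrix_matrix_mult_def mat_def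
    by (simp add: vec_eq_iff sum_divide_distrib[symmetric] adj_right assms)
  have BA: "B ** A = mat 1"
    unfolding B_def matrix_matrix_mult_def mat_def
    by (simp add: vec_eq_iff sum_divide_distrib[symmetric] adj_left assms)
  have uniq: "A' = B" if "A ** A' = mat 1 \<and> A' ** A = mat 1" for A'
  proof -
    have "A' = A' ** (A ** B)" using AB by (simp add: matrix_mul_rid)
    also have "\<dots> = (A' ** A) ** B" by (simp add: matrix_mul_assoc)
    also have "\<dots> = B" using that by (simp add: matrix_mul_lid)
    finally show ?thesis .
  qed
  let ?P = "\<lambda>A'. A ** A' = mat 1 \<and> A' ** A = mat 1"
  have "?P (SOME A'. ?P A')" by (rule someI[of ?P B]) (use AB BA in simp)
  then have "matrix_inv A = B" unfolding matrix_inv_def by (rule uniq)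
  then show ?thesis by (simp add: B_def)
qed

lemmas smooth_intros = finite_class.finite_UNIV smooth_add smooth_diff smooth_mult smooth_minus smooth_const smooth_sum smooth_pd

context
  fixes U G
  assumes SM: "smooth_metric U G"
begin

lemma openU: "open U" using SM by (simp add: smooth_metric_def)

lemma smooth_G: "smooth_on U (\<lambda>y. G y $ a $ b)" using SM by (simp add: smooth_metric_def)

lemma G_sym: "y \<in> U \<Longrightarrow> G y $ a $ b = G y $ b $ a"
proof -
  assume "y \<in> U"
  then have "transpose (G y) = G y" using SM by (simp add: smooth_metric_def)
  then have "transpose (G y) $ a $ b = G y $ a $ b" by simp
  then show ?thesis by (simp add: transpose_def)
qed

lemma detG: "y \<in> U \<Longrightarrow> det (G y) \<noteq> 0" using SM by (simp add: smooth_metric_def)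

lemma smooth_det: "smooth_on U (\<lambda>y. det (G y))"
  unfolding det_3 by (intro smooth_intros openU smooth_G)

lemma smooth_ginv: "smooth_on U (\<lambda>y. ginv G y $ a $ b)"
proof -
  have "smooth_on U (\<lambda>y. adjE (G y) a b * inverse (det (G y)))"
    unfolding adjE_def
    by (intro smooth_intros openU smooth_G smooth_inverse smooth_det ballI detG)
  then show ?thesis
    by (rule smooth_cong[OF openU, rotated]) (simp add: ginv_def inv3 detG divide_inverse)
qed

lemma ginv_G: "y \<in> U \<Longrightarrow> (\<Sum>b\<in>UNIV. ginv G y $ a $ b * G y $ b $ c) = (if a = c then 1 else 0)"
  unfolding ginv_def using inv3[OF detG] adj_left[where A="G y" and i=a and j=c] detG
  by (simp add: sum_divide_distrib[symmetric])

lemma G_ginv: "y \<in> U \<Longrightarrow> (\<Sum>b\<in>UNIV. G y $ a $ b * ginv G y $ b $ c) = (if a = c then 1 else 0)"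
  unfolding ginv_def using inv3[OF detG] adj_right[where A="G y" and i=a and j=c] detG
  by (simp add: sum_divide_distrib[symmetric] sum_distrib_left)

lemma ginv_sym: "y \<in> U \<Longrightarrow> ginv G y $ a $ b = ginv G y $ b $ a"
  unfolding ginv_def using inv3[OF detG] G_sym
  by (simp add: adjE_def)

lemma smooth_christ: "smooth_on U (christ G c a b)"
proof -
  have "christ G c a b = (\<lambda>x. (1/2) * (\<Sum>d\<in>UNIV. ginv G x $ c $ d *
      (pd a (\<lambda>y. G y $ d $ b) x + pd b (\<lambda>y. G y $ d $ a) x - pd d (\<lambda>y. G y $ a $ b) x)))"
    by (rule ext) (simp add: christ_def)
  then show ?thesis
    by (simp only:) (intro smooth_intros openU smooth_G smooth_ginv)
qed

lemma smooth_riem: "smooth_on U (riem G a b d c)"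
proof -
  have "riem G a b d c = (\<lambda>x. pd a (christ G c b d) x - pd b (christ G c a d) x
     + (\<Sum>e\<in>UNIV. christ G c a e x * christ G e b d x - christ G c b e x * christ G e a d x))"
    by (rule ext) (simp add: riem_def)
  then show ?thesis
    by (simp only:) (intro smooth_intros openU smooth_christ)
qed

lemma smooth_ricci: "smooth_on U (ricci G a b)"
proof -
  have "ricci G a b = (\<lambda>x. \<Sum>c\<in>UNIV. riem G a c b c x)"
    by (rule ext) (simp add: ricci_def)
  then show ?thesis
    by (simp only:) (intro smooth_intros openU smooth_riem)
qed

lemma smooth_scal: "smooth_on U (scal G)"
proof -
  have "scal G = (\<lambda>x. \<Sum>a\<in>UNIV. \<Sum>b\<in>UNIV. ginv G x $ a $ b * ricci G a b x)"
    by (rule ext) (simp add: scal_def)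
  then show ?thesis
    by (simp only:) (intro smooth_intros openU smooth_ricci smooth_ginv)
qed

lemma smooth_Phi: "smooth_on U (Phi G a b)"
proof -
  have "Phi G a b = (\<lambda>x. ricci G a b x - (1/3) * scal G x * G x $ a $ b)"
    by (rule ext) (simp add: Phi_def)
  then show ?thesis
    by (simp only:) (intro smooth_intros openU smooth_ricci smooth_scal smooth_G)
qed

lemma smooth_Sfun: "smooth_on U (Sfun G)"
proof -
  have "Sfun G = (\<lambda>x. (1/12) * scal G x)"
    by (rule ext) (simp add: Sfun_def)
  then show ?thesis
    by (simp only:) (intro smooth_intros openU smooth_scal)
qed

lemma dG_sym: "y \<in> U \<Longrightarrow> pd e (\<lambda>z. G z $ a $ b) y = pd e (\<lambda>z. G z $ b $ a) y"
  by (rule pd_cong[OF openU]) (auto simp: G_sym)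

lemma christ_sym: "y \<in> U \<Longrightarrow> christ G c a b y = christ G c b a y"
  unfolding christ_def by (simp add: algebra_simps dG_sym)

end

lemma d1: "(\<Sum>d\<in>UNIV. X d * (if d = b then 1 else 0)) = (X (b::3) :: real)"
proof -
  have "(\<Sum>d\<in>UNIV. X d * (if d = b then 1 else 0)) = (\<Sum>d\<in>UNIV. if d = b then X d else 0)"
    by (rule sum.cong) auto
  then show ?thesis using sum.delta[of "UNIV::3 set" b X] by simp
qed
lemma d2: "(\<Sum>d\<in>UNIV. (if d = b then 1 else 0) * X d) = (X (b::3) :: real)"
  using d1[of X b] by (simp add: mult.commute)
lemma d3: "(\<Sum>d\<in>UNIV. X d * (if b = d then 1 else 0)) = (X (b::3) :: real)"
  using d1[of X b] by (simp add: eq_commute)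
lemma d4: "(\<Sum>d\<in>UNIV. (if b = d then 1 else 0) * X d) = (X (b::3) :: real)"
  using d1[of X b] by (simp add: eq_commute mult.commute)

lemma cfac: "(\<Sum>f\<in>A. (c * S f) * h f) = c * (\<Sum>f\<in>A. S f * (h f::real))"
  by (simp only: sum_distrib_left mult.assoc)

lemma contract_gi:
  fixes g gi :: "3 \<Rightarrow> 3 \<Rightarrow> real"
  assumes gis: "\<And>a b. gi a b = gi b a"
    and inv: "\<And>a c. (\<Sum>b\<in>UNIV. gi a b * g b c) = (if a = c then 1 else 0)"
  shows "(\<Sum>f\<in>UNIV. (\<Sum>d\<in>UNIV. gi f d * X d) * g f b) = X b"
proof -
  have "(\<Sum>f\<in>UNIV. (\<Sum>d\<in>UNIV. gi f d * X d) * g f b) = (\<Sum>f\<in>UNIV. \<Sum>d\<in>UNIV. X d * (gi d f * g f b))"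
    unfolding sum_distrib_right by (simp add: gis mult_ac)
  also have "\<dots> = (\<Sum>d\<in>UNIV. \<Sum>f\<in>UNIV. X d * (gi d f * g f b))" by (rule sum.swap)
  also have "\<dots> = (\<Sum>d\<in>UNIV. X d * (\<Sum>f\<in>UNIV. gi d f * g f b))" by (simp add: sum_distrib_left)
  also have "\<dots> = X b" by (simp add: inv d1)
  finally show ?thesis .
qed

lemma contract_gi':
  fixes g gi :: "3 \<Rightarrow> 3 \<Rightarrow> real"
  assumes gis: "\<And>a b. gi a b = gi b a"
    and inv: "\<And>a c. (\<Sum>b\<in>UNIV. gi a b * g b c) = (if a = c then 1 else 0)"
  shows "(\<Sum>f\<in>UNIV. (c * (\<Sum>d\<in>UNIV. gi f d * X d)) * g f b) = c * X b"
proof -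
  have "(\<Sum>f\<in>UNIV. (c * (\<Sum>d\<in>UNIV. gi f d * X d)) * g f b) = c * (\<Sum>f\<in>UNIV. (\<Sum>d\<in>UNIV. gi f d * X d) * g f b)"
    by (rule cfac)
  then show ?thesis using contract_gi[OF gis inv] by simp
qed

lemma compat_alg:
  fixes g gi :: "3 \<Rightarrow> 3 \<Rightarrow> real" and dg \<Gamma> :: "3 \<Rightarrow> 3 \<Rightarrow> 3 \<Rightarrow> real"
  assumes gs: "\<And>a b. g a b = g b a" and gis: "\<And>a b. gi a b = gi b a"
    and inv: "\<And>a c. (\<Sum>b\<in>UNIV. gi a b * g b c) = (if a = c then 1 else 0)"
    and dgs: "\<And>e a b. dg e a b = dg e b a"
    and Gam: "\<And>c a b. \<Gamma> c a b = 1/2 * (\<Sum>d\<in>UNIV. gi c d * (dg a d b + dg b d a - dg d a b))"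
  shows "dg e a b = (\<Sum>f\<in>UNIV. \<Gamma> f e a * g f b + \<Gamma> f e b * g a f)"
proof -
  have k: "(\<Sum>f\<in>UNIV. \<Gamma> f p q * g f r) = 1/2 * (dg p r q + dg q r p - dg r p q)" for p q r
    unfolding Gam by (rule contract_gi'[OF gis inv])
  have "(\<Sum>f\<in>UNIV. \<Gamma> f e a * g f b + \<Gamma> f e b * g a f) =
     (\<Sum>f\<in>UNIV. \<Gamma> f e a * g f b) + (\<Sum>f\<in>UNIV. \<Gamma> f e b * g f a)"
    by (simp add: sum.distrib gs)
  also have "\<dots> = dg e a b" unfolding k using dgs by (simp add: algebra_simps)
  finally show ?thesis by simp
qed


definition Rf :: "(3\<Rightarrow>3\<Rightarrow>3\<Rightarrow>real) \<Rightarrow> (3\<Rightarrow>3\<Rightarrow>3\<Rightarrow>3\<Rightarrow>real) \<Rightarrow> 3\<Rightarrow>3\<Rightarrow>3\<Rightarrow>3\<Rightarrow>real" where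
  "Rf \<Gamma> d\<Gamma> a b d c = d\<Gamma> a c b d - d\<Gamma> b c a d + (\<Sum>e\<in>UNIV. \<Gamma> c a e * \<Gamma> e b d - \<Gamma> c b e * \<Gamma> e a d)"

definition dRf :: "(3\<Rightarrow>3\<Rightarrow>3\<Rightarrow>real) \<Rightarrow> (3\<Rightarrow>3\<Rightarrow>3\<Rightarrow>3\<Rightarrow>real) \<Rightarrow> (3\<Rightarrow>3\<Rightarrow>3\<Rightarrow>3\<Rightarrow>3\<Rightarrow>real) \<Rightarrow> 3\<Rightarrow>3\<Rightarrow>3\<Rightarrow>3\<Rightarrow>3\<Rightarrow>real" where
  "dRf \<Gamma> d\<Gamma> dd\<Gamma> e a b d c = dd\<Gamma> e a c b d - dd\<Gamma> e b c a d + (\<Sum>f\<in>UNIV. d\<Gamma> e c a f * \<Gamma> f b d + \<Gamma> c a f * d\<Gamma> e f b d - d\<Gamma> e c b f * \<Gamma> f a d - \<Gamma> c b f * d\<Gamma> e f a d)"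

definition NRf :: "(3\<Rightarrow>3\<Rightarrow>3\<Rightarrow>real) \<Rightarrow> (3\<Rightarrow>3\<Rightarrow>3\<Rightarrow>3\<Rightarrow>real) \<Rightarrow> (3\<Rightarrow>3\<Rightarrow>3\<Rightarrow>3\<Rightarrow>3\<Rightarrow>real) \<Rightarrow> 3\<Rightarrow>3\<Rightarrow>3\<Rightarrow>3\<Rightarrow>3\<Rightarrow>real" where
  "NRf \<Gamma> R dR e a b d c = dR e a b d c - (\<Sum>f\<in>UNIV. \<Gamma> f e a * R f b d c + \<Gamma> f e b * R a f d c + \<Gamma> f e d * R a b f c) + (\<Sum>f\<in>UNIV. \<Gamma> c e f * R a b d f)"

definition NRicf :: "(3\<Rightarrow>3\<Rightarrow>3\<Rightarrow>real) \<Rightarrow> (3\<Rightarrow>3\<Rightarrow>real) \<Rightarrow> (3\<Rightarrow>3\<Rightarrow>3\<Rightarrow>real) \<Rightarrow> 3\<Rightarrow>3\<Rightarrow>3\<Rightarrow>real" where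
  "NRicf \<Gamma> Ric dRic e a d = dRic e a d - (\<Sum>f\<in>UNIV. \<Gamma> f e a * Ric f d + \<Gamma> f e d * Ric a f)"

lemma NR_antisym:
  assumes RA: "\<And>a b d c. R a b d c + R b a d c = 0" and dRA: "\<And>e a b d c. dR e a b d c + dR e b a d c = 0"
  shows "NRf \<Gamma> R dR a b e d c = - NRf \<Gamma> R dR a e b d c"
proof -
  have "NRf \<Gamma> R dR a b e d c + NRf \<Gamma> R dR a e b d c = (dR a b e d c + dR a e b d c)
    - (\<Sum>f\<in>UNIV. \<Gamma> f a b * (R f e d c + R e f d c)) - (\<Sum>f\<in>UNIV. \<Gamma> f a e * (R b f d c + R f b d c))
    - (\<Sum>f\<in>UNIV. \<Gamma> f a d * (R b e f c + R e b f c)) + (\<Sum>f\<in>UNIV. \<Gamma> c a f * (R b e d f + R e b d f))"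
    unfolding NRf_def sum_3 by (simp add: algebra_simps)
  also have "\<dots> = 0" by (simp add: RA dRA)
  finally show ?thesis by simp
qed

lemma S1_alg:
  "(\<Sum>b\<in>UNIV. NRf \<Gamma> R dR e a b d b) = NRicf \<Gamma> (\<lambda>a d. \<Sum>b\<in>UNIV. R a b d b) (\<lambda>e a d. \<Sum>b\<in>UNIV. dR e a b d b) e a d"
  unfolding NRf_def NRicf_def sum_3 by (simp add: algebra_simps)

lemma S4_alg:
  fixes gi :: "3\<Rightarrow>3\<Rightarrow>real"
  assumes Gs: "\<And>c a b. \<Gamma> c a b = \<Gamma> c b a" and gis: "\<And>a b. gi a b = gi b a"
  shows "(\<Sum>a\<in>UNIV. \<Sum>d\<in>UNIV. gi a d * NRicf \<Gamma> Ric dRic e a d) =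
     (\<Sum>a\<in>UNIV. \<Sum>d\<in>UNIV. (- (\<Sum>f\<in>UNIV. \<Gamma> a e f * gi f d + \<Gamma> d e f * gi a f)) * Ric a d + gi a d * dRic e a d)"
  unfolding NRicf_def sum_3 by (simp add: algebra_simps Gs gis)


lemma S3_alg:
  fixes gi Ric :: "3\<Rightarrow>3\<Rightarrow>real" and dgi dRic \<Gamma> :: "3\<Rightarrow>3\<Rightarrow>3\<Rightarrow>real"
  assumes Gs: "\<And>c a b. \<Gamma> c a b = \<Gamma> c b a" and gis: "\<And>a b. gi a b = gi b a"
    and dgi: "\<And>e a b. dgi e a b = - (\<Sum>f\<in>UNIV. \<Gamma> a e f * gi f b + \<Gamma> b e f * gi a f)"
    and I1: "\<And>e c. (\<Sum>a\<in>UNIV. \<Sum>d\<in>UNIV. gi a d * R e a d c) = - (\<Sum>h\<in>UNIV. Ric h e * gi h c)"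
    and dI1: "\<And>b e c. (\<Sum>a\<in>UNIV. \<Sum>d\<in>UNIV. dgi b a d * R e a d c + gi a d * dR b e a d c)
        = - (\<Sum>h\<in>UNIV. dRic b h e * gi h c + Ric h e * dgi b h c)"
  shows "(\<Sum>a\<in>UNIV. \<Sum>d\<in>UNIV. gi a d * NRf \<Gamma> R dR b e a d c) = - (\<Sum>h\<in>UNIV. gi h c * NRicf \<Gamma> Ric dRic b h e)"
proof -
  have "(\<Sum>a\<in>UNIV. \<Sum>d\<in>UNIV. gi a d * NRf \<Gamma> R dR b e a d c) - (- (\<Sum>h\<in>UNIV. gi h c * NRicf \<Gamma> Ric dRic b h e))
    = ((\<Sum>a\<in>UNIV. \<Sum>d\<in>UNIV. dgi b a d * R e a d c + gi a d * dR b e a d c)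
        - (- (\<Sum>h\<in>UNIV. dRic b h e * gi h c + Ric h e * dgi b h c)))
      - (\<Sum>f\<in>UNIV. \<Gamma> f b e * ((\<Sum>a\<in>UNIV. \<Sum>d\<in>UNIV. gi a d * R f a d c) - (- (\<Sum>h\<in>UNIV. Ric h f * gi h c))))
      + (\<Sum>f\<in>UNIV. \<Gamma> c b f * ((\<Sum>a\<in>UNIV. \<Sum>d\<in>UNIV. gi a d * R e a d f) - (- (\<Sum>h\<in>UNIV. Ric h e * gi h f))))"
    unfolding NRf_def NRicf_def dgi sum_3 by (simp add: algebra_simps Gs gis)
  also have "\<dots> = 0" by (simp only: I1 dI1) simp
  finally show ?thesis by simp
qed



lemma CB_alg:
  fixes gi Ric :: "3\<Rightarrow>3\<Rightarrow>real" and dgi dRic \<Gamma> :: "3\<Rightarrow>3\<Rightarrow>3\<Rightarrow>real"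
  assumes Gs: "\<And>c a b. \<Gamma> c a b = \<Gamma> c b a" and gis: "\<And>a b. gi a b = gi b a"
    and B2: "\<And>e a b d c. NRf \<Gamma> R dR e a b d c + NRf \<Gamma> R dR a b e d c + NRf \<Gamma> R dR b e a d c = 0"
    and RA: "\<And>a b d c. R a b d c + R b a d c = 0" and dRA: "\<And>e a b d c. dR e a b d c + dR e b a d c = 0"
    and Ricd: "\<And>a d. Ric a d = (\<Sum>b\<in>UNIV. R a b d b)" and dRicd: "\<And>e a d. dRic e a d = (\<Sum>b\<in>UNIV. dR e a b d b)"
    and Rics: "\<And>a d. Ric a d = Ric d a" and dRics: "\<And>e a d. dRic e a d = dRic e d a"
    and dgi: "\<And>e a b. dgi e a b = - (\<Sum>f\<in>UNIV. \<Gamma> a e f * gi f b + \<Gamma> b e f * gi a f)"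
    and I1: "\<And>e c. (\<Sum>a\<in>UNIV. \<Sum>d\<in>UNIV. gi a d * R e a d c) = - (\<Sum>h\<in>UNIV. Ric h e * gi h c)"
    and dI1: "\<And>b e c. (\<Sum>a\<in>UNIV. \<Sum>d\<in>UNIV. dgi b a d * R e a d c + gi a d * dR b e a d c)
        = - (\<Sum>h\<in>UNIV. dRic b h e * gi h c + Ric h e * dgi b h c)"
    and dscal: "\<And>e. dscal e = (\<Sum>a\<in>UNIV. \<Sum>d\<in>UNIV. dgi e a d * Ric a d + gi a d * dRic e a d)"
  shows "(\<Sum>a\<in>UNIV. \<Sum>d\<in>UNIV. gi a d * NRicf \<Gamma> Ric dRic d a e) = dscal e / 2"
proof -
  have Ric_eq: "Ric = (\<lambda>a d. \<Sum>b\<in>UNIV. R a b d b)" by (intro ext) (rule Ricd)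
  have dRic_eq: "dRic = (\<lambda>e a d. \<Sum>b\<in>UNIV. dR e a b d b)" by (intro ext) (rule dRicd)
  have S1: "(\<Sum>b\<in>UNIV. NRf \<Gamma> R dR e a b d b) = NRicf \<Gamma> Ric dRic e a d" for e a d
    unfolding Ric_eq dRic_eq by (rule S1_alg)
  have S2: "(\<Sum>b\<in>UNIV. NRf \<Gamma> R dR a b e d b) = - NRicf \<Gamma> Ric dRic a e d" for e a d
  proof -
    have "(\<Sum>b\<in>UNIV. NRf \<Gamma> R dR a b e d b) = (\<Sum>b\<in>UNIV. - NRf \<Gamma> R dR a e b d b)"
      by (rule sum.cong[OF refl]) (rule NR_antisym[OF RA dRA])
    then show ?thesis using S1[of a e d] by (simp add: sum_negf)
  qed
  have S3: "(\<Sum>a\<in>UNIV. \<Sum>d\<in>UNIV. gi a d * NRf \<Gamma> R dR b e a d b) = - (\<Sum>h\<in>UNIV. gi h b * NRicf \<Gamma> Ric dRic b h e)" for b e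
    by (rule S3_alg[OF Gs gis dgi I1 dI1])
  have S4: "(\<Sum>a\<in>UNIV. \<Sum>d\<in>UNIV. gi a d * NRicf \<Gamma> Ric dRic e a d) = dscal e"
    unfolding dscal S4_alg[OF Gs gis] dgi ..
  have NRs: "NRicf \<Gamma> Ric dRic a e d = NRicf \<Gamma> Ric dRic a d e" for a e d
    unfolding NRicf_def sum_3 by (simp add: Rics dRics[of a e d] algebra_simps)
  define X where "X a d = gi a d * NRicf \<Gamma> Ric dRic e a d - gi a d * NRicf \<Gamma> Ric dRic a e d" for a d
  define Y where "Y a d b = gi a d * NRf \<Gamma> R dR b e a d b" for a d b
  have e1: "gi a d * (\<Sum>b\<in>UNIV. NRf \<Gamma> R dR e a b d b + NRf \<Gamma> R dR a b e d b + NRf \<Gamma> R dR b e a d b)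
     = X a d + (\<Sum>b\<in>UNIV. Y a d b)" for a d
    unfolding X_def Y_def sum.distrib S1 S2 by (simp add: algebra_simps sum_distrib_left)
  have c1: "0 = (\<Sum>a\<in>UNIV. \<Sum>d\<in>UNIV. gi a d * (\<Sum>b\<in>UNIV. NRf \<Gamma> R dR e a b d b + NRf \<Gamma> R dR a b e d b + NRf \<Gamma> R dR b e a d b))"
    by (simp add: B2)
  have c2: "(\<Sum>a\<in>UNIV. \<Sum>d\<in>UNIV. gi a d * (\<Sum>b\<in>UNIV. NRf \<Gamma> R dR e a b d b + NRf \<Gamma> R dR a b e d b + NRf \<Gamma> R dR b e a d b))
     = (\<Sum>a\<in>UNIV. \<Sum>d\<in>UNIV. X a d) + (\<Sum>a\<in>UNIV. \<Sum>d\<in>UNIV. \<Sum>b\<in>UNIV. Y a d b)"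
    unfolding e1 by (simp only: sum.distrib)
  have c3: "(\<Sum>a\<in>UNIV. \<Sum>d\<in>UNIV. \<Sum>b\<in>UNIV. Y a d b) = (\<Sum>a\<in>UNIV. \<Sum>b\<in>UNIV. \<Sum>d\<in>UNIV. Y a d b)"
    by (rule sum.cong[OF refl], rule sum.swap)
  have c4: "(\<Sum>a\<in>UNIV. \<Sum>b\<in>UNIV. \<Sum>d\<in>UNIV. Y a d b) = (\<Sum>b\<in>UNIV. \<Sum>a\<in>UNIV. \<Sum>d\<in>UNIV. Y a d b)"
    by (rule sum.swap)
  have c5: "(\<Sum>b\<in>UNIV. \<Sum>a\<in>UNIV. \<Sum>d\<in>UNIV. Y a d b) = - (\<Sum>b\<in>UNIV. \<Sum>h\<in>UNIV. gi h b * NRicf \<Gamma> Ric dRic b h e)"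
    unfolding Y_def S3 by (simp add: sum_negf)
  have c6: "(\<Sum>a\<in>UNIV. \<Sum>d\<in>UNIV. X a d) = dscal e - (\<Sum>a\<in>UNIV. \<Sum>d\<in>UNIV. gi a d * NRicf \<Gamma> Ric dRic a d e)"
  proof -
    have "(\<Sum>a\<in>UNIV. \<Sum>d\<in>UNIV. gi a d * NRicf \<Gamma> Ric dRic a e d) = (\<Sum>a\<in>UNIV. \<Sum>d\<in>UNIV. gi a d * NRicf \<Gamma> Ric dRic a d e)"
      by (rule sum.cong[OF refl], rule sum.cong[OF refl]) (simp only: NRs[of _ e])
    then show ?thesis unfolding X_def sum_subtractf S4 by simp
  qed
  have "0 = dscal e - (\<Sum>a\<in>UNIV. \<Sum>d\<in>UNIV. gi a d * NRicf \<Gamma> Ric dRic a d e)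
      - (\<Sum>b\<in>UNIV. \<Sum>h\<in>UNIV. gi h b * NRicf \<Gamma> Ric dRic b h e)"
    using c1 c2 c3 c4 c5 c6 by linarith
  moreover have "(\<Sum>b\<in>UNIV. \<Sum>h\<in>UNIV. gi h b * NRicf \<Gamma> Ric dRic b h e) = (\<Sum>a\<in>UNIV. \<Sum>d\<in>UNIV. gi a d * NRicf \<Gamma> Ric dRic d a e)"
  proof -
    have "(\<Sum>b\<in>UNIV. \<Sum>h\<in>UNIV. gi h b * NRicf \<Gamma> Ric dRic b h e) = (\<Sum>h\<in>UNIV. \<Sum>b\<in>UNIV. gi h b * NRicf \<Gamma> Ric dRic b h e)"
      by (rule sum.swap)
    then show ?thesis by simp
  qed
  moreover have "(\<Sum>a\<in>UNIV. \<Sum>d\<in>UNIV. gi a d * NRicf \<Gamma> Ric dRic a d e) = (\<Sum>a\<in>UNIV. \<Sum>d\<in>UNIV. gi a d * NRicf \<Gamma> Ric dRic d a e)"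
  proof -
    have "(\<Sum>a\<in>UNIV. \<Sum>d\<in>UNIV. gi a d * NRicf \<Gamma> Ric dRic a d e) = (\<Sum>d\<in>UNIV. \<Sum>a\<in>UNIV. gi a d * NRicf \<Gamma> Ric dRic a d e)"
      by (rule sum.swap)
    also have "\<dots> = (\<Sum>d\<in>UNIV. \<Sum>a\<in>UNIV. gi d a * NRicf \<Gamma> Ric dRic a d e)"
      by (intro sum.cong refl) (subst gis, rule refl)
    finally show ?thesis by simp
  qed
  ultimately show ?thesis by linarith
qed


lemma contract:
  fixes A B :: "3 \<Rightarrow> 3 \<Rightarrow> real"
  assumes inv: "\<And>a c. (\<Sum>b\<in>UNIV. A a b * B b c) = (if a = c then 1 else 0)"
  shows "(\<Sum>h\<in>UNIV. (\<Sum>k\<in>UNIV. T k * A k h) * B h c) = T c"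
proof -
  have "(\<Sum>h\<in>UNIV. (\<Sum>k\<in>UNIV. T k * A k h) * B h c) = (\<Sum>h\<in>UNIV. \<Sum>k\<in>UNIV. T k * (A k h * B h c))"
    unfolding sum_distrib_right by (simp add: mult_ac)
  also have "\<dots> = (\<Sum>k\<in>UNIV. \<Sum>h\<in>UNIV. T k * (A k h * B h c))" by (rule sum.swap)
  also have "\<dots> = (\<Sum>k\<in>UNIV. T k * (\<Sum>h\<in>UNIV. A k h * B h c))" by (simp add: sum_distrib_left)
  also have "\<dots> = T c" by (simp add: inv d1)
  finally show ?thesis .
qed

lemma pair_sym_alg:
  fixes L :: "3 \<Rightarrow> 3 \<Rightarrow> 3 \<Rightarrow> 3 \<Rightarrow> real"
  assumes A1: "\<And>a b d c. L a b d c = - L b a d c"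
    and A2: "\<And>a b d c. L a b d c = - L a b c d"
    and B: "\<And>a b d c. L a b d c + L b d a c + L d a b c = 0"
  shows "L a b d c = L d c a b"
proof -
  have "L a b d c + L b d a c + L d a b c = 0" "L b d c a + L d c b a + L c b d a = 0"
    "L d c a b + L c a d b + L a d c b = 0" "L c a b d + L a b c d + L b c a d = 0"
    using B[of a b d c] B[of b d c a] B[of d c a b] B[of c a b d] by auto
  moreover have "L b d a c = - L b d c a" "L d a b c = - L a d b c" "L d c b a = - L d c a b"
    "L c b d a = - L b c d a" "L c a d b = - L c a b d" "L a d c b = - L a d b c"
    "L a b c d = - L a b d c" "L b c a d = - L b c d a"
    using A2[of b d a c] A1[of d a b c] A2[of d c b a] A1[of c b d a] A2[of c a d b] A2[of a d c b]
      A2[of a b c d] A2[of b c a d] by auto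
  ultimately show ?thesis by linarith
qed

lemma B1_alg:
  assumes Gs: "\<And>c a b. \<Gamma> c a b = \<Gamma> c b a" and dGs: "\<And>e c a b. d\<Gamma> e c a b = d\<Gamma> e c b a"
  shows "Rf \<Gamma> d\<Gamma> a b d c + Rf \<Gamma> d\<Gamma> b d a c + Rf \<Gamma> d\<Gamma> d a b c = 0"
  unfolding Rf_def sum_3 by (simp add: algebra_simps Gs dGs)

lemma LA_alg:
  fixes g :: "3\<Rightarrow>3\<Rightarrow>real" and dg \<Gamma> :: "3\<Rightarrow>3\<Rightarrow>3\<Rightarrow>real" and ddg d\<Gamma> :: "3\<Rightarrow>3\<Rightarrow>3\<Rightarrow>3\<Rightarrow>real"
  assumes gs: "\<And>a b. g a b = g b a" and Gs: "\<And>c a b. \<Gamma> c a b = \<Gamma> c b a"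
    and compat: "\<And>e a b. dg e a b = (\<Sum>f\<in>UNIV. \<Gamma> f e a * g f b + \<Gamma> f e b * g a f)"
    and DM: "\<And>f e a b. ddg f e a b = (\<Sum>h\<in>UNIV. d\<Gamma> f h e a * g h b + \<Gamma> h e a * dg f h b + d\<Gamma> f h e b * g a h + \<Gamma> h e b * dg f a h)"
    and ddgs: "\<And>f e a b. ddg f e a b = ddg e f a b"
  shows "(\<Sum>h\<in>UNIV. Rf \<Gamma> d\<Gamma> a b d h * g h c) + (\<Sum>h\<in>UNIV. Rf \<Gamma> d\<Gamma> a b c h * g h d) = 0"
proof -
  have "ddg a b d c - ddg b a d c = 0" using ddgs by simp
  then have "(\<Sum>h\<in>UNIV. d\<Gamma> a h b d * g h c + \<Gamma> h b d * dg a h c + d\<Gamma> a h b c * g d h + \<Gamma> h b c * dg a d h)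
     - (\<Sum>h\<in>UNIV. d\<Gamma> b h a d * g h c + \<Gamma> h a d * dg b h c + d\<Gamma> b h a c * g d h + \<Gamma> h a c * dg b d h) = 0"
    unfolding DM .
  moreover have "(\<Sum>h\<in>UNIV. Rf \<Gamma> d\<Gamma> a b d h * g h c) + (\<Sum>h\<in>UNIV. Rf \<Gamma> d\<Gamma> a b c h * g h d) =
     (\<Sum>h\<in>UNIV. d\<Gamma> a h b d * g h c + \<Gamma> h b d * dg a h c + d\<Gamma> a h b c * g d h + \<Gamma> h b c * dg a d h)
     - (\<Sum>h\<in>UNIV. d\<Gamma> b h a d * g h c + \<Gamma> h a d * dg b h c + d\<Gamma> b h a c * g d h + \<Gamma> h a c * dg b d h)"
    unfolding Rf_def compat sum_3 by (simp add: algebra_simps Gs gs)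
  ultimately show ?thesis by simp
qed


lemma B2_alg:
  assumes Gs: "\<And>c a b. \<Gamma> c a b = \<Gamma> c b a" and dGs: "\<And>e c a b. d\<Gamma> e c a b = d\<Gamma> e c b a"
    and ddGs: "\<And>f e c a b. dd\<Gamma> f e c a b = dd\<Gamma> e f c a b"
  shows "NRf \<Gamma> (Rf \<Gamma> d\<Gamma>) (dRf \<Gamma> d\<Gamma> dd\<Gamma>) e a b d c + NRf \<Gamma> (Rf \<Gamma> d\<Gamma>) (dRf \<Gamma> d\<Gamma> dd\<Gamma>) a b e d c
     + NRf \<Gamma> (Rf \<Gamma> d\<Gamma>) (dRf \<Gamma> d\<Gamma> dd\<Gamma>) b e a d c = 0"
  unfolding NRf_def dRf_def Rf_def sum_3
  apply (simp add: algebra_simps Gs dGs)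
  apply (simp add: ddGs)
  done


lemmas pd_rules = pd_add pd_diff pd_mult pd_sum pd_const pd_minus

context
  fixes U G
  assumes SM: "smooth_metric U G"
begin

lemma oU: "open U" using openU[OF SM] .

lemma dfG: "y \<in> U \<Longrightarrow> (\<lambda>z. G z $ a $ b) differentiable (at y)"
  using smooth_diffble[OF smooth_G[OF SM]] by blast
lemma dfgi: "y \<in> U \<Longrightarrow> (\<lambda>z. ginv G z $ a $ b) differentiable (at y)"
  using smooth_diffble[OF smooth_ginv[OF SM]] by blast
lemma dfchrist: "y \<in> U \<Longrightarrow> christ G c a b differentiable (at y)"
  using smooth_diffble[OF smooth_christ[OF SM]] by blast
lemma dfpdchrist: "y \<in> U \<Longrightarrow> pd e (christ G c a b) differentiable (at y)"
  using smooth_diffble[OF smooth_pd[OF smooth_christ[OF SM]]] by blast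
lemma dfpdG: "y \<in> U \<Longrightarrow> pd e (\<lambda>z. G z $ a $ b) differentiable (at y)"
  using smooth_diffble[OF smooth_pd[OF smooth_G[OF SM]]] by blast
lemma dfriem: "y \<in> U \<Longrightarrow> riem G a b d c differentiable (at y)"
  using smooth_diffble[OF smooth_riem[OF SM]] by blast
lemma dfricci: "y \<in> U \<Longrightarrow> ricci G a b differentiable (at y)"
  using smooth_diffble[OF smooth_ricci[OF SM]] by blast
lemma dfscal: "y \<in> U \<Longrightarrow> scal G differentiable (at y)"
  using smooth_diffble[OF smooth_scal[OF SM]] by blast
lemma dfPhi: "y \<in> U \<Longrightarrow> Phi G a b differentiable (at y)"
  using smooth_diffble[OF smooth_Phi[OF SM]] by blast
lemma dfSfun: "y \<in> U \<Longrightarrow> Sfun G differentiable (at y)"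
  using smooth_diffble[OF smooth_Sfun[OF SM]] by blast

lemmas dfs = dfG dfgi dfchrist dfpdchrist dfpdG dfriem dfricci dfscal dfPhi dfSfun

lemma compat: assumes y: "y \<in> U"
  shows "pd e (\<lambda>z. G z $ a $ b) y = (\<Sum>f\<in>UNIV. christ G f e a y * G y $ f $ b + christ G f e b y * G y $ a $ f)"
  by (rule compat_alg[where g="\<lambda>a b. G y $ a $ b" and gi="\<lambda>a b. ginv G y $ a $ b"
        and dg="\<lambda>e a b. pd e (\<lambda>z. G z $ a $ b) y" and \<Gamma>="\<lambda>c a b. christ G c a b y",
        OF G_sym[OF SM y] ginv_sym[OF SM y] ginv_G[OF SM y] dG_sym[OF SM y]])
     (simp add: christ_def)

lemma DM: "y \<in> U \<Longrightarrow> pd f (pd e (\<lambda>z. G z $ a $ b)) y = (\<Sum>h\<in>UNIV.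
     pd f (christ G h e a) y * G y $ h $ b + christ G h e a y * pd f (\<lambda>z. G z $ h $ b) y
   + pd f (christ G h e b) y * G y $ a $ h + christ G h e b y * pd f (\<lambda>z. G z $ a $ h) y)"
proof -
  assume y: "y \<in> U"
  have "pd f (pd e (\<lambda>z. G z $ a $ b)) y = pd f (\<lambda>z. \<Sum>h\<in>UNIV. christ G h e a z * G z $ h $ b + christ G h e b z * G z $ a $ h) y"
    by (rule pd_cong[OF oU y]) (rule compat)
  also have "\<dots> = (\<Sum>h\<in>UNIV. pd f (christ G h e a) y * G y $ h $ b + christ G h e a y * pd f (\<lambda>z. G z $ h $ b) y
   + pd f (christ G h e b) y * G y $ a $ h + christ G h e b y * pd f (\<lambda>z. G z $ a $ h) y)"
    using y by (simp add: pd_rules dfs algebra_simps)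
  finally show ?thesis .
qed


lemma ddG_sym: "y \<in> U \<Longrightarrow> pd f (pd e (\<lambda>z. G z $ a $ b)) y = pd e (pd f (\<lambda>z. G z $ a $ b)) y"
  by (rule schwarz[OF oU]) (use smooth_G[OF SM] in \<open>auto simp: smooth_Ck\<close>)

lemma dchrist_sym: "y \<in> U \<Longrightarrow> pd e (christ G c a b) y = pd e (christ G c b a) y"
  by (rule pd_cong[OF oU]) (auto simp: christ_sym[OF SM])

lemma riem_Rf: "riem G a b d c y = Rf (\<lambda>c a b. christ G c a b y) (\<lambda>e c a b. pd e (christ G c a b) y) a b d c"
  by (simp add: riem_def Rf_def)

lemma Rf_antisym: "Rf \<Gamma> d\<Gamma> a b d c = - Rf \<Gamma> d\<Gamma> b a d c"
  unfolding Rf_def sum_3 by (simp add: algebra_simps)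

lemma riem_antisym: "riem G a b d c y = - riem G b a d c y"
  unfolding riem_Rf by (rule Rf_antisym)

definition "Lw y a b d c = (\<Sum>h\<in>UNIV. riem G a b d h y * G y $ h $ c)"

lemma LA: assumes y: "y \<in> U" shows "Lw y a b d c = - Lw y a b c d"
proof -
  have "(\<Sum>h\<in>UNIV. Rf (\<lambda>c a b. christ G c a b y) (\<lambda>e c a b. pd e (christ G c a b) y) a b d h * G y $ h $ c)
     + (\<Sum>h\<in>UNIV. Rf (\<lambda>c a b. christ G c a b y) (\<lambda>e c a b. pd e (christ G c a b) y) a b c h * G y $ h $ d) = 0"
    by (rule LA_alg[where dg="\<lambda>e a b. pd e (\<lambda>z. G z $ a $ b) y" and ddg="\<lambda>f e a b. pd f (pd e (\<lambda>z. G z $ a $ b)) y",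
          OF G_sym[OF SM y] christ_sym[OF SM y] compat[OF y] DM[OF y] ddG_sym[OF y]])
  then show ?thesis unfolding Lw_def riem_Rf by simp
qed

lemma B1: assumes y: "y \<in> U" shows "riem G a b d c y + riem G b d a c y + riem G d a b c y = 0"
  unfolding riem_Rf by (rule B1_alg[OF christ_sym[OF SM y] dchrist_sym[OF y]])

lemma PS: assumes y: "y \<in> U" shows "Lw y a b d c = Lw y d c a b"
proof (rule pair_sym_alg)
  show "Lw y a b d c = - Lw y b a d c" for a b d c
    unfolding Lw_def by (subst riem_antisym) (simp add: sum_negf)
  show "Lw y a b d c = - Lw y a b c d" for a b d c by (rule LA[OF y])
  show "Lw y a b d c + Lw y b d a c + Lw y d a b c = 0" for a b d c
  proof -
    have "Lw y a b d c + Lw y b d a c + Lw y d a b c =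
       (\<Sum>h\<in>UNIV. (riem G a b d h y + riem G b d a h y + riem G d a b h y) * G y $ h $ c)"
      unfolding Lw_def by (simp add: sum.distrib algebra_simps)
    also have "\<dots> = 0" by (simp add: B1[OF y])
    finally show ?thesis .
  qed
qed

lemma raise: assumes y: "y \<in> U" shows "riem G a b d c y = (\<Sum>h\<in>UNIV. Lw y a b d h * ginv G y $ h $ c)"
  unfolding Lw_def
  by (rule contract[where A="\<lambda>a b. G y $ a $ b" and B="\<lambda>a b. ginv G y $ a $ b", OF G_ginv[OF SM y], symmetric])

lemma ricci_sym: assumes y: "y \<in> U" shows "ricci G a d y = ricci G d a y"
proof -
  have "ricci G d a y = (\<Sum>b\<in>UNIV. \<Sum>h\<in>UNIV. Lw y d b a h * ginv G y $ h $ b)"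
    unfolding ricci_def raise[OF y] ..
  also have "\<dots> = (\<Sum>h\<in>UNIV. \<Sum>b\<in>UNIV. Lw y d b a h * ginv G y $ h $ b)" by (rule sum.swap)
  also have "\<dots> = (\<Sum>h\<in>UNIV. \<Sum>b\<in>UNIV. Lw y a h d b * ginv G y $ b $ h)"
    by (intro sum.cong refl) (simp add: PS[OF y, of d] ginv_sym[OF SM y])
  also have "\<dots> = ricci G a d y"
    unfolding ricci_def raise[OF y] ..
  finally show ?thesis by simp
qed


lemma Lw_antisym: "Lw y a b d c = - Lw y b a d c"
  unfolding Lw_def by (subst riem_antisym) (simp add: sum_negf)

lemma I1: assumes y: "y \<in> U"
  shows "(\<Sum>a\<in>UNIV. \<Sum>d\<in>UNIV. ginv G y $ a $ d * riem G e a d c y) = - (\<Sum>h\<in>UNIV. ricci G h e y * ginv G y $ h $ c)"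
proof -
  have K: "(\<Sum>a\<in>UNIV. \<Sum>d\<in>UNIV. ginv G y $ a $ d * Lw y e a d h) = - ricci G h e y" for h
  proof -
    have "(\<Sum>a\<in>UNIV. \<Sum>d\<in>UNIV. ginv G y $ a $ d * Lw y e a d h) = (\<Sum>a\<in>UNIV. \<Sum>d\<in>UNIV. - (ginv G y $ a $ d * Lw y h d e a))"
      by (intro sum.cong refl) (subst PS[OF y], subst Lw_antisym, simp)
    also have "\<dots> = - (\<Sum>d\<in>UNIV. \<Sum>a\<in>UNIV. (\<Sum>k\<in>UNIV. riem G h d e k y * G y $ k $ a) * ginv G y $ a $ d)"
      unfolding Lw_def sum_negf by (subst sum.swap) (simp add: mult.commute)
    also have "\<dots> = - (\<Sum>d\<in>UNIV. riem G h d e d y)"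
      by (simp add: contract[where A="\<lambda>a b. G y $ a $ b" and B="\<lambda>a b. ginv G y $ a $ b", OF G_ginv[OF SM y]])
    finally show ?thesis by (simp add: ricci_def)
  qed
  have "(\<Sum>a\<in>UNIV. \<Sum>d\<in>UNIV. ginv G y $ a $ d * riem G e a d c y)
     = (\<Sum>a\<in>UNIV. \<Sum>d\<in>UNIV. ginv G y $ a $ d * (\<Sum>h\<in>UNIV. Lw y e a d h * ginv G y $ h $ c))"
    unfolding raise[OF y] ..
  also have "\<dots> = (\<Sum>h\<in>UNIV. (\<Sum>a\<in>UNIV. \<Sum>d\<in>UNIV. ginv G y $ a $ d * Lw y e a d h) * ginv G y $ h $ c)"
    unfolding sum_3 by (simp add: algebra_simps)
  also have "\<dots> = - (\<Sum>h\<in>UNIV. ricci G h e y * ginv G y $ h $ c)"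
    unfolding K by (simp add: sum_negf)
  finally show ?thesis .
qed

end

lemma sum_neg_add1: "(\<Sum>k\<in>A. (-(P k + Q k)) * (c k::real)) = - ((\<Sum>k\<in>A. P k * c k) + (\<Sum>k\<in>A. Q k * c k))"
proof -
  have "(\<Sum>k\<in>A. (-(P k + Q k)) * (c k::real)) = (\<Sum>k\<in>A. - (P k * c k) + - (Q k * c k))"
    by (rule sum.cong) (auto simp: algebra_simps)
  then show ?thesis by (simp add: sum_subtractf sum_negf)
qed

lemma pd_divc:
  assumes "f differentiable (at x)"
  shows "pd i (\<lambda>y. f y / c) x = pd i f x / (c::real)"
proof -
  have "pd i (\<lambda>y. f y * (1/c)) x = pd i f x * (1/c)"
    using pd_mult[OF assms differentiable_const, of i "1/c"] pd_const[of i "1/c" x] by simp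
  then show ?thesis by simp
qed

lemma dgi_alg:
  fixes g gi dg dgi :: "3\<Rightarrow>3\<Rightarrow>real" and \<Gamma> :: "3\<Rightarrow>3\<Rightarrow>3\<Rightarrow>real"
  assumes inv1: "\<And>a c. (\<Sum>b\<in>UNIV. g a b * gi b c) = (if a = c then 1 else 0)"
    and inv2: "\<And>a c. (\<Sum>b\<in>UNIV. gi a b * g b c) = (if a = c then 1 else 0)"
    and compat: "\<And>b c. dg b c = (\<Sum>f\<in>UNIV. \<Gamma> f e b * g f c + \<Gamma> f e c * g b f)"
    and H: "\<And>a c. (\<Sum>b\<in>UNIV. gi a b * dg b c + dgi a b * g b c) = 0"
    and Gs: "\<And>c a b. \<Gamma> c a b = \<Gamma> c b a" and gis: "\<And>a b. gi a b = gi b a"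
  shows "dgi a c = - (\<Sum>f\<in>UNIV. \<Gamma> a e f * gi f c + \<Gamma> c e f * gi a f)"
proof -
  define T where "T f = (\<Sum>b\<in>UNIV. gi a b * \<Gamma> f e b)" for f
  have s2: "(\<Sum>b\<in>UNIV. dgi a b * g b k) = - (\<Sum>b\<in>UNIV. gi a b * dg b k)" for k
    using H[of a k] by (simp add: sum.distrib eq_neg_iff_add_eq_0 add.commute)
  have s3: "(\<Sum>b\<in>UNIV. gi a b * dg b k) = (\<Sum>f\<in>UNIV. T f * g f k) + (\<Sum>f\<in>UNIV. \<Gamma> f e k * (\<Sum>b\<in>UNIV. gi a b * g b f))" for k
    unfolding compat T_def sum_3 by (simp add: algebra_simps)
  have s4: "(\<Sum>f\<in>UNIV. \<Gamma> f e k * (\<Sum>b\<in>UNIV. gi a b * g b f)) = \<Gamma> a e k" for k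
    unfolding inv2 by (rule d3)
  have "dgi a c = (\<Sum>k\<in>UNIV. (\<Sum>b\<in>UNIV. dgi a b * g b k) * gi k c)"
    by (rule contract[OF inv1, symmetric])
  also have "\<dots> = (\<Sum>k\<in>UNIV. (- ((\<Sum>f\<in>UNIV. T f * g f k) + \<Gamma> a e k)) * gi k c)"
    unfolding s2 s3 s4 ..
  also have "\<dots> = - ((\<Sum>k\<in>UNIV. (\<Sum>f\<in>UNIV. T f * g f k) * gi k c) + (\<Sum>k\<in>UNIV. \<Gamma> a e k * gi k c))"
    by (rule sum_neg_add1)
  also have "\<dots> = - (T c + (\<Sum>k\<in>UNIV. \<Gamma> a e k * gi k c))"
    unfolding contract[OF inv1] ..
  also have "\<dots> = - (\<Sum>f\<in>UNIV. \<Gamma> a e f * gi f c + \<Gamma> c e f * gi a f)"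
    unfolding T_def sum_3 by (simp add: algebra_simps Gs gis)
  finally show ?thesis .
qed

context
  fixes U G x
  assumes SM: "smooth_metric U G" and x: "x \<in> U"
begin

lemma dginv: "pd e (\<lambda>z. ginv G z $ a $ b) x = - (\<Sum>f\<in>UNIV. christ G a e f x * ginv G x $ f $ b + christ G b e f x * ginv G x $ a $ f)"
proof (rule dgi_alg[where g="\<lambda>a b. G x $ a $ b" and gi="\<lambda>a b. ginv G x $ a $ b"
      and dg="\<lambda>a b. pd e (\<lambda>z. G z $ a $ b) x" and dgi="\<lambda>a b. pd e (\<lambda>z. ginv G z $ a $ b) x" and \<Gamma>="\<lambda>c a b. christ G c a b x",
      OF G_ginv[OF SM x] ginv_G[OF SM x] compat[OF SM x] _ christ_sym[OF SM x] ginv_sym[OF SM x]])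
  fix a c
  have "pd e (\<lambda>z. \<Sum>b\<in>UNIV. ginv G z $ a $ b * G z $ b $ c) x = pd e (\<lambda>z. if a = c then 1 else 0) x"
    by (rule pd_cong[OF oU[OF SM] x]) (rule ginv_G[OF SM])
  then show "(\<Sum>b\<in>UNIV. ginv G x $ a $ b * pd e (\<lambda>z. G z $ b $ c) x + pd e (\<lambda>z. ginv G z $ a $ b) x * G x $ b $ c) = 0"
    using x by (simp add: pd_rules dfs[OF SM])
qed


lemma ddchrist_sym1: "pd f (pd e (christ G c a b)) x = pd e (pd f (christ G c a b)) x"
  by (rule schwarz[OF oU[OF SM] x]) (use smooth_christ[OF SM] in \<open>auto simp: smooth_Ck\<close>)

lemma ddchrist_sym2: "pd f (pd e (christ G c a b)) x = pd f (pd e (christ G c b a)) x"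
  by (rule pd_cong[OF oU[OF SM] x]) (rule dchrist_sym[OF SM])

abbreviation "\<Gamma>x \<equiv> (\<lambda>c a b. christ G c a b x)"
abbreviation "d\<Gamma>x \<equiv> (\<lambda>e c a b. pd e (christ G c a b) x)"
abbreviation "dd\<Gamma>x \<equiv> (\<lambda>f e c a b. pd f (pd e (christ G c a b)) x)"
abbreviation "Rx \<equiv> (\<lambda>a b d c. riem G a b d c x)"
abbreviation "dRx \<equiv> (\<lambda>e a b d c. pd e (riem G a b d c) x)"

lemma driem: "pd e (riem G a b d c) x = dRf \<Gamma>x d\<Gamma>x dd\<Gamma>x e a b d c"
proof -
  have "riem G a b d c = (\<lambda>z. pd a (christ G c b d) z - pd b (christ G c a d) z
     + (\<Sum>e\<in>UNIV. christ G c a e z * christ G e b d z - christ G c b e z * christ G e a d z))"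
    by (rule ext) (simp add: riem_def)
  then show ?thesis using x by (simp add: pd_rules dfs[OF SM] dRf_def algebra_simps)
qed

lemma B2x: "NRf \<Gamma>x Rx dRx e a b d c + NRf \<Gamma>x Rx dRx a b e d c + NRf \<Gamma>x Rx dRx b e a d c = 0"
proof -
  have R: "Rx = Rf \<Gamma>x d\<Gamma>x" by (intro ext) (rule riem_Rf[OF SM])
  have dR: "dRx = dRf \<Gamma>x d\<Gamma>x dd\<Gamma>x" by (intro ext) (rule driem)
  show ?thesis unfolding R dR
    by (rule B2_alg) (auto intro: christ_sym[OF SM x] dchrist_sym[OF SM x] ddchrist_sym1)
qed

lemma dRA: "pd e (riem G a b d c) x + pd e (riem G b a d c) x = 0"
proof -
  have "riem G b a d c = (\<lambda>z. - riem G a b d c z)" by (rule ext) (subst riem_antisym[OF SM], simp)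
  then show ?thesis using x by (simp add: pd_minus dfs[OF SM])
qed

lemma dricci: "pd e (ricci G a d) x = (\<Sum>b\<in>UNIV. pd e (riem G a b d b) x)"
proof -
  have "ricci G a d = (\<lambda>z. \<Sum>b\<in>UNIV. riem G a b d b z)" by (rule ext) (simp add: ricci_def)
  then show ?thesis using x by (simp add: pd_rules dfs[OF SM])
qed

lemma dricci_sym: "pd e (ricci G a d) x = pd e (ricci G d a) x"
  by (rule pd_cong[OF oU[OF SM] x]) (rule ricci_sym[OF SM])

lemma dI1: "(\<Sum>a\<in>UNIV. \<Sum>d\<in>UNIV. pd b (\<lambda>z. ginv G z $ a $ d) x * riem G e a d c x + ginv G x $ a $ d * pd b (riem G e a d c) x)
   = - (\<Sum>h\<in>UNIV. pd b (ricci G h e) x * ginv G x $ h $ c + ricci G h e x * pd b (\<lambda>z. ginv G z $ h $ c) x)"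
proof -
  have "pd b (\<lambda>z. \<Sum>a\<in>UNIV. \<Sum>d\<in>UNIV. ginv G z $ a $ d * riem G e a d c z) x
     = pd b (\<lambda>z. - (\<Sum>h\<in>UNIV. ricci G h e z * ginv G z $ h $ c)) x"
    by (rule pd_cong[OF oU[OF SM] x]) (rule I1[OF SM])
  then show ?thesis using x by (simp add: pd_rules dfs[OF SM] algebra_simps)
qed

lemma dscal: "pd e (scal G) x = (\<Sum>a\<in>UNIV. \<Sum>d\<in>UNIV. pd e (\<lambda>z. ginv G z $ a $ d) x * ricci G a d x + ginv G x $ a $ d * pd e (ricci G a d) x)"
proof -
  have "scal G = (\<lambda>z. \<Sum>a\<in>UNIV. \<Sum>d\<in>UNIV. ginv G z $ a $ d * ricci G a d z)" by (rule ext) (simp add: scal_def)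
  then show ?thesis using x by (simp add: pd_rules dfs[OF SM] algebra_simps)
qed

lemma CBric: "(\<Sum>a\<in>UNIV. \<Sum>d\<in>UNIV. ginv G x $ a $ d * NRicf \<Gamma>x (\<lambda>a d. ricci G a d x) (\<lambda>e a d. pd e (ricci G a d) x) d a e)
   = pd e (scal G) x / 2"
  by (rule CB_alg[where R=Rx and dR=dRx and dgi="\<lambda>e a b. pd e (\<lambda>z. ginv G z $ a $ b) x",
     OF christ_sym[OF SM x] ginv_sym[OF SM x] B2x _ dRA ricci_def dricci ricci_sym[OF SM x] dricci_sym dginv I1[OF SM x] dI1 dscal])
     (subst riem_antisym[OF SM], simp)


lemma dPhi: "pd d (Phi G a b) x = pd d (ricci G a b) x - (1/3) * (pd d (scal G) x * G x $ a $ b + scal G x * pd d (\<lambda>z. G z $ a $ b) x)"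
proof -
  have "Phi G a b = (\<lambda>z. ricci G a b z - ((1/3) * scal G z) * G z $ a $ b)" by (rule ext) (simp add: Phi_def)
  then show ?thesis using x by (simp add: pd_rules pd_divc dfs[OF SM] algebra_simps)
qed

lemma nablaPhi_eq: "nablaPhi G d a b x = NRicf \<Gamma>x (\<lambda>a d. ricci G a d x) (\<lambda>e a d. pd e (ricci G a d) x) d a b
    - (1/3) * pd d (scal G) x * G x $ a $ b"
  unfolding nablaPhi_def dPhi compat[OF SM x] NRicf_def Phi_def sum_3 by (simp add: algebra_simps)

lemma dSfun: "pd b (Sfun G) x = pd b (scal G) x / 12"
proof -
  have "Sfun G = (\<lambda>z. (1/12) * scal G z)" by (rule ext) (simp add: Sfun_def)
  then show ?thesis using x by (simp add: pd_rules pd_divc dfs[OF SM])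
qed

lemma CB: "(\<Sum>a\<in>UNIV. \<Sum>d\<in>UNIV. ginv G x $ a $ d * nablaPhi G d a b x) = 2 * pd b (Sfun G) x"
proof -
  have k: "(\<Sum>a\<in>UNIV. \<Sum>d\<in>UNIV. ginv G x $ a $ d * (pd d (scal G) x * G x $ a $ b)) = pd b (scal G) x"
  proof -
    have "(\<Sum>a\<in>UNIV. \<Sum>d\<in>UNIV. ginv G x $ a $ d * (pd d (scal G) x * G x $ a $ b))
       = (\<Sum>d\<in>UNIV. pd d (scal G) x * (\<Sum>a\<in>UNIV. G x $ b $ a * ginv G x $ a $ d))"
      unfolding sum_3 by (simp add: algebra_simps G_sym[OF SM x, of _ b])
    also have "\<dots> = pd b (scal G) x" unfolding G_ginv[OF SM x] by (rule d3)
    finally show ?thesis .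
  qed
  have "(\<Sum>a\<in>UNIV. \<Sum>d\<in>UNIV. ginv G x $ a $ d * nablaPhi G d a b x)
     = (\<Sum>a\<in>UNIV. \<Sum>d\<in>UNIV. ginv G x $ a $ d * NRicf \<Gamma>x (\<lambda>a d. ricci G a d x) (\<lambda>e a d. pd e (ricci G a d) x) d a b)
      - (1/3) * (\<Sum>a\<in>UNIV. \<Sum>d\<in>UNIV. ginv G x $ a $ d * (pd d (scal G) x * G x $ a $ b))"
    unfolding nablaPhi_eq sum_3 by (simp add: algebra_simps)
  also have "\<dots> = pd b (scal G) x / 2 - (1/3) * pd b (scal G) x" unfolding CBric k ..
  finally show ?thesis unfolding dSfun by simp
qed

end

lemma dc1: "(\<Sum>d\<in>UNIV. X d * (if d = b then 1 else 0)) = (X (b::3) :: 'a::comm_ring_1)"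
proof -
  have "(\<Sum>d\<in>UNIV. X d * (if d = b then 1 else 0)) = (\<Sum>d\<in>UNIV. if d = b then X d else 0)"
    by (rule sum.cong) auto
  then show ?thesis using sum.delta[of "UNIV::3 set" b X] by simp
qed
lemma dc4: "(\<Sum>d\<in>UNIV. (if b = d then 1 else 0) * X d) = (X (b::3) :: 'a::comm_ring_1)"
  using dc1[of X b] by (simp add: eq_commute mult.commute)

context
  fixes g gi P :: "3\<Rightarrow>3\<Rightarrow>complex" and Q :: "3\<Rightarrow>3\<Rightarrow>3\<Rightarrow>complex"
    and s K l n :: "3\<Rightarrow>complex" and Lk :: "3\<Rightarrow>3\<Rightarrow>complex"
  assumes gs: "\<And>a b. g a b = g b a" and Ps: "\<And>a b. P a b = P b a"
    and inv: "\<And>a c. (\<Sum>b\<in>UNIV. g a b * gi b c) = (if a = c then 1 else 0)"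
    and inv2: "\<And>a c. (\<Sum>b\<in>UNIV. gi a b * g b c) = (if a = c then 1 else 0)"
    and compl: "\<And>a b. gi a b = K a * l b + l a * K b - 2 * n a * n b"
    and fKl: "(\<Sum>a\<in>UNIV. \<Sum>b\<in>UNIV. g a b * K a * l b) = 1"
    and fnn: "(\<Sum>a\<in>UNIV. \<Sum>b\<in>UNIV. g a b * n a * n b) = - 1/2"
    and fKK: "(\<Sum>a\<in>UNIV. \<Sum>b\<in>UNIV. g a b * K a * K b) = 0"
    and fll: "(\<Sum>a\<in>UNIV. \<Sum>b\<in>UNIV. g a b * l a * l b) = 0"
    and fKn: "(\<Sum>a\<in>UNIV. \<Sum>b\<in>UNIV. g a b * K a * n b) = 0"
    and fln: "(\<Sum>a\<in>UNIV. \<Sum>b\<in>UNIV. g a b * l a * n b) = 0"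
    and tr: "(\<Sum>a\<in>UNIV. \<Sum>b\<in>UNIV. gi a b * P a b) = 0"
    and PKK: "(\<Sum>a\<in>UNIV. \<Sum>b\<in>UNIV. P a b * K a * K b) = 0"
    and PKn: "(\<Sum>a\<in>UNIV. \<Sum>b\<in>UNIV. P a b * K a * n b) = 0"
    and phi: "(\<Sum>a\<in>UNIV. \<Sum>b\<in>UNIV. P a b * K a * l b) \<noteq> 0"
begin

definition "gf u v = (\<Sum>a\<in>UNIV. \<Sum>b\<in>UNIV. g a b * u a * v b)"
definition "Pf u v = (\<Sum>a\<in>UNIV. \<Sum>b\<in>UNIV. P a b * u a * v b)"
definition "lw u a = (\<Sum>d\<in>UNIV. g a d * u d)"
definition "\<phi> = Pf K l"

lemma gf_sym: "gf u v = gf v u"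
  unfolding gf_def sum_3 by (simp add: gs algebra_simps)

lemma Pf_sym: "Pf u v = Pf v u"
  unfolding Pf_def sum_3 by (simp add: Ps algebra_simps)

lemma vdec: "u a = K a * gf l u + l a * gf K u - 2 * n a * gf n u"
proof -
  have "u a = (\<Sum>d\<in>UNIV. (\<Sum>b\<in>UNIV. gi a b * g b d) * u d)" unfolding inv2 by (rule dc4[symmetric])
  also have "\<dots> = K a * gf l u + l a * gf K u - 2 * n a * gf n u"
    unfolding compl gf_def sum_3 by (simp add: algebra_simps)
  finally show ?thesis .
qed

lemma covdec: "w a = (\<Sum>d\<in>UNIV. g a d * (K d * (\<Sum>b\<in>UNIV. l b * w b) + l d * (\<Sum>b\<in>UNIV. K b * w b) - 2 * n d * (\<Sum>b\<in>UNIV. n b * w b)))"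
proof -
  have "w a = (\<Sum>b\<in>UNIV. (\<Sum>d\<in>UNIV. g a d * gi d b) * w b)" unfolding inv by (rule dc4[symmetric])
  also have "\<dots> = (\<Sum>d\<in>UNIV. g a d * (K d * (\<Sum>b\<in>UNIV. l b * w b) + l d * (\<Sum>b\<in>UNIV. K b * w b) - 2 * n d * (\<Sum>b\<in>UNIV. n b * w b)))"
    unfolding compl sum_3 by (simp add: algebra_simps)
  finally show ?thesis .
qed

lemma PK: "(\<Sum>b\<in>UNIV. P a b * K b) = \<phi> * lw K a"
proof -
  have c1: "(\<Sum>b\<in>UNIV. l b * (\<Sum>c\<in>UNIV. P b c * K c)) = \<phi>"
    unfolding \<phi>_def Pf_def sum_3 by (simp add: algebra_simps Ps)
  have c2: "(\<Sum>b\<in>UNIV. K b * (\<Sum>c\<in>UNIV. P b c * K c)) = 0"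
    using PKK unfolding sum_3 by (simp add: algebra_simps Ps)
  have c3: "(\<Sum>b\<in>UNIV. n b * (\<Sum>c\<in>UNIV. P b c * K c)) = 0"
    using PKn unfolding sum_3 by (simp add: algebra_simps Ps)
  have "(\<Sum>b\<in>UNIV. P a b * K b) = (\<Sum>d\<in>UNIV. g a d * (K d * \<phi> + l d * 0 - 2 * n d * 0))"
    using covdec[of "\<lambda>a. \<Sum>b\<in>UNIV. P a b * K b" a] unfolding c1 c2 c3 .
  then show ?thesis by (simp add: lw_def sum_3 algebra_simps)
qed

lemma W0: "(\<Sum>d\<in>UNIV. g a d * K d) * (\<Sum>c\<in>UNIV. P b c * K c) - (\<Sum>d\<in>UNIV. g b d * K d) * (\<Sum>c\<in>UNIV. P a c * K c) = 0"
  unfolding PK lw_def by (simp add: algebra_simps)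

lemma Pnn: "Pf n n = \<phi>"
proof -
  have "(\<Sum>a\<in>UNIV. \<Sum>b\<in>UNIV. gi a b * P a b) = 2 * \<phi> - 2 * Pf n n"
    unfolding compl \<phi>_def Pf_def sum_3 by (simp add: algebra_simps Ps)
  then show ?thesis using tr by simp
qed


definition "Vf u a = (\<Sum>e\<in>UNIV. u e * Lk e a)"
definition "Q3 u v w = (\<Sum>e\<in>UNIV. \<Sum>b\<in>UNIV. \<Sum>c\<in>UNIV. u e * v b * w c * Q e b c)"
definition "sK = (\<Sum>a\<in>UNIV. s a * K a)"

lemma gf_lin_r: "gf u (\<lambda>b. \<alpha> * v b + \<beta> * w b) = \<alpha> * gf u v + \<beta> * gf u w"
  unfolding gf_def sum_3 by (simp add: algebra_simps)
lemma gf_lin_l: "gf (\<lambda>b. \<alpha> * v b + \<beta> * w b) u = \<alpha> * gf v u + \<beta> * gf w u"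
  unfolding gf_def sum_3 by (simp add: algebra_simps)
lemma Pf_lin_r: "Pf u (\<lambda>b. \<alpha> * v b + \<beta> * w b) = \<alpha> * Pf u v + \<beta> * Pf u w"
  unfolding Pf_def sum_3 by (simp add: algebra_simps)
lemma Vf_lin: "Vf (\<lambda>b. \<alpha> * v b + \<beta> * w b) = (\<lambda>a. \<alpha> * Vf v a + \<beta> * Vf w a)"
  unfolding Vf_def sum_3 by (simp add: algebra_simps)

lemma vdec2: "gf K u = 0 \<Longrightarrow> u = (\<lambda>a. gf l u * K a + (- 2 * gf n u) * n a)"
  by (rule ext) (subst vdec, simp add: algebra_simps)

context
  assumes H4: "\<And>c. (\<Sum>a\<in>UNIV. \<Sum>b\<in>UNIV. K a * K b * (- (Q b c a - Q c b a) + g a b * s c - g a c * s b + 3 * g b c * s a)) = 0"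
    and CB: "\<And>b. (\<Sum>a\<in>UNIV. \<Sum>d\<in>UNIV. gi a d * Q d a b) = 2 * s b"
    and D1: "\<And>c. (\<Sum>a\<in>UNIV. \<Sum>b\<in>UNIV. Q c a b * K a * K b) + 2 * (\<Sum>a\<in>UNIV. \<Sum>b\<in>UNIV. P a b * Lk c a * K b) = 0"
    and D2: "\<And>e a b. (\<Sum>d\<in>UNIV. g a d * Lk e d) * (\<Sum>c\<in>UNIV. P b c * K c) + (\<Sum>d\<in>UNIV. g a d * K d) * (\<Sum>c\<in>UNIV. Q e b c * K c) + (\<Sum>d\<in>UNIV. g a d * K d) * (\<Sum>c\<in>UNIV. P b c * Lk e c)
        - ((\<Sum>d\<in>UNIV. g b d * Lk e d) * (\<Sum>c\<in>UNIV. P a c * K c) + (\<Sum>d\<in>UNIV. g b d * K d) * (\<Sum>c\<in>UNIV. Q e a c * K c) + (\<Sum>d\<in>UNIV. g b d * K d) * (\<Sum>c\<in>UNIV. P a c * Lk e c)) = 0"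
    and D3: "\<And>c. (\<Sum>a\<in>UNIV. \<Sum>b\<in>UNIV. g a b * K a * Lk c b) = 0"
begin

lemma T0: "gf K (Vf u) = 0"
proof -
  have "gf K (Vf u) = (\<Sum>c\<in>UNIV. u c * (\<Sum>a\<in>UNIV. \<Sum>b\<in>UNIV. g a b * K a * Lk c b))"
    unfolding gf_def Vf_def sum_3 by (simp add: algebra_simps)
  then show ?thesis by (simp add: D3)
qed

lemma Vdec: "Vf u = (\<lambda>a. gf l (Vf u) * K a + (- 2 * gf n (Vf u)) * n a)"
  by (rule vdec2[OF T0])

lemma PnV: "Pf n (Vf u) = - 2 * gf n (Vf u) * \<phi>"
proof -
  have "Pf n (Vf u) = gf l (Vf u) * Pf n K + (- 2 * gf n (Vf u)) * Pf n n"
    by (subst Vdec) (rule Pf_lin_r)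
  moreover have "Pf n K = 0"
  proof -
    have "Pf K n = 0" using PKn by (simp only: Pf_def)
    then show ?thesis using Pf_sym[of n K] by simp
  qed
  ultimately show ?thesis by (simp add: Pnn)
qed

lemma D1c: "Q3 u K K = 0"
proof -
  have e: "(\<Sum>c\<in>UNIV. u c * ((\<Sum>a\<in>UNIV. \<Sum>b\<in>UNIV. Q c a b * K a * K b) + 2 * (\<Sum>a\<in>UNIV. Lk c a * (\<Sum>b\<in>UNIV. P a b * K b))))
     = Q3 u K K + 2 * \<phi> * gf (Vf u) K"
    unfolding PK Q3_def gf_def Vf_def lw_def sum_3 by (simp add: algebra_simps gs)
  have "(\<Sum>a\<in>UNIV. Lk c a * (\<Sum>b\<in>UNIV. P a b * K b)) = (\<Sum>a\<in>UNIV. \<Sum>b\<in>UNIV. P a b * Lk c a * K b)" for c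
    unfolding sum_3 by (simp add: algebra_simps)
  then have "(\<Sum>c\<in>UNIV. u c * ((\<Sum>a\<in>UNIV. \<Sum>b\<in>UNIV. Q c a b * K a * K b) + 2 * (\<Sum>a\<in>UNIV. Lk c a * (\<Sum>b\<in>UNIV. P a b * K b)))) = 0"
    by (simp add: D1)
  then show ?thesis using e T0 gf_sym[of "Vf u" K] by simp
qed

lemma H4c: "- Q3 K u K + Q3 u K K + 2 * gf K u * sK = 0"
proof -
  have "(\<Sum>c\<in>UNIV. u c * (\<Sum>a\<in>UNIV. \<Sum>b\<in>UNIV. K a * K b * (- (Q b c a - Q c b a) + g a b * s c - g a c * s b + 3 * g b c * s a)))
     = - Q3 K u K + Q3 u K K + gf K K * (\<Sum>c\<in>UNIV. s c * u c) + 2 * gf K u * sK"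
    unfolding Q3_def gf_def sK_def sum_3 by (simp add: algebra_simps gs)
  moreover have "gf K K = 0" using fKK by (simp add: gf_def)
  moreover have "(\<Sum>c\<in>UNIV. u c * (\<Sum>a\<in>UNIV. \<Sum>b\<in>UNIV. K a * K b * (- (Q b c a - Q c b a) + g a b * s c - g a c * s b + 3 * g b c * s a))) = 0"
    by (simp only: H4) simp
  ultimately show ?thesis by simp
qed

lemma D2c: "Q3 u n K = 3 * \<phi> * gf n (Vf u)"
proof -
  let ?A = "\<lambda>e a. lw (Lk e) a" and ?B = "\<lambda>a. lw K a"
  let ?C = "\<lambda>e b. (\<Sum>c\<in>UNIV. Q e b c * K c)" and ?D = "\<lambda>e b. (\<Sum>c\<in>UNIV. P b c * Lk e c)"
  have z: "\<phi> * (?A e a * ?B b - ?A e b * ?B a) + ?B a * (?C e b + ?D e b) - ?B b * (?C e a + ?D e a) = 0" for e a b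
  proof -
    have "(\<Sum>d\<in>UNIV. g a d * Lk e d) * (\<Sum>c\<in>UNIV. P b c * K c) + (\<Sum>d\<in>UNIV. g a d * K d) * (\<Sum>c\<in>UNIV. Q e b c * K c) + (\<Sum>d\<in>UNIV. g a d * K d) * (\<Sum>c\<in>UNIV. P b c * Lk e c)
        - ((\<Sum>d\<in>UNIV. g b d * Lk e d) * (\<Sum>c\<in>UNIV. P a c * K c) + (\<Sum>d\<in>UNIV. g b d * K d) * (\<Sum>c\<in>UNIV. Q e a c * K c) + (\<Sum>d\<in>UNIV. g b d * K d) * (\<Sum>c\<in>UNIV. P a c * Lk e c))
     = \<phi> * (?A e a * ?B b - ?A e b * ?B a) + ?B a * (?C e b + ?D e b) - ?B b * (?C e a + ?D e a)"
      unfolding PK lw_def by (simp add: algebra_simps)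
    then show ?thesis using D2[where e=e and a=a and b=b] by simp
  qed
  have gen: "(\<Sum>e\<in>UNIV. \<Sum>a\<in>UNIV. \<Sum>b\<in>UNIV. u e * p a * q b * (\<phi> * (A e a * B b - A e b * B a) + B a * (C e b + D e b) - B b * (C e a + D e a)))
    = \<phi> * ((\<Sum>e\<in>UNIV. u e * (\<Sum>a\<in>UNIV. p a * A e a)) * (\<Sum>b\<in>UNIV. q b * B b) - (\<Sum>e\<in>UNIV. u e * (\<Sum>b\<in>UNIV. q b * A e b)) * (\<Sum>a\<in>UNIV. p a * B a))
      + (\<Sum>a\<in>UNIV. p a * B a) * (\<Sum>e\<in>UNIV. u e * (\<Sum>b\<in>UNIV. q b * (C e b + D e b)))
      - (\<Sum>b\<in>UNIV. q b * B b) * (\<Sum>e\<in>UNIV. u e * (\<Sum>a\<in>UNIV. p a * (C e a + D e a)))" 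
    for p q :: "3 \<Rightarrow> complex" and A C D :: "3 \<Rightarrow> 3 \<Rightarrow> complex" and B :: "3 \<Rightarrow> complex"
    unfolding sum_3 by (simp add: algebra_simps)
  have f1: "(\<Sum>e\<in>UNIV. u e * (\<Sum>a\<in>UNIV. p a * ?A e a)) = gf (Vf u) p" for p
    unfolding gf_def Vf_def lw_def sum_3 by (simp add: algebra_simps gs)
  have f2: "(\<Sum>b\<in>UNIV. q b * ?B b) = gf K q" for q
    unfolding gf_def lw_def sum_3 by (simp add: algebra_simps gs)
  have f3: "(\<Sum>e\<in>UNIV. u e * (\<Sum>b\<in>UNIV. q b * (?C e b + ?D e b))) = Q3 u q K + Pf q (Vf u)" for q
    unfolding Q3_def Pf_def Vf_def sum_3 by (simp add: algebra_simps)
  have gKl: "gf K l = 1" using fKl by (simp add: gf_def)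
  have gKn: "gf K n = 0" using fKn by (simp add: gf_def)
  have "0 = (\<Sum>e\<in>UNIV. \<Sum>a\<in>UNIV. \<Sum>b\<in>UNIV. u e * l a * n b * (\<phi> * (?A e a * ?B b - ?A e b * ?B a) + ?B a * (?C e b + ?D e b) - ?B b * (?C e a + ?D e a)))"
    by (simp add: z)
  also have "\<dots> = \<phi> * (gf (Vf u) l * gf K n - gf (Vf u) n * gf K l) + gf K l * (Q3 u n K + Pf n (Vf u))
       - gf K n * (Q3 u l K + Pf l (Vf u))"
    unfolding gen f1 f2 f3 ..
  finally have X: "0 = \<phi> * (gf (Vf u) l * gf K n - gf (Vf u) n * gf K l) + gf K l * (Q3 u n K + Pf n (Vf u))
       - gf K n * (Q3 u l K + Pf l (Vf u))" .
  show ?thesis using X PnV[of u] by (simp add: gKl gKn gf_sym[of "Vf u" n] algebra_simps)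
qed


lemma kappa: "gf n (Vf K) = 0"
proof -
  have gKn: "gf K n = 0" using fKn by (simp add: gf_def)
  have "Q3 K n K = 0" using H4c[of n] D1c[of n] gKn by simp
  then show ?thesis using D2c[of K] phi unfolding \<phi>_def Pf_def by simp
qed

lemma rho: "gf n (Vf n) = 0"
proof -
  have gKl: "gf K l = 1" using fKl by (simp add: gf_def)
  have a: "Q3 K l K = 2 * sK" using H4c[of l] D1c[of l] gKl by simp
  have "(\<Sum>b\<in>UNIV. K b * (\<Sum>a\<in>UNIV. \<Sum>d\<in>UNIV. gi a d * Q d a b)) = Q3 l K K + Q3 K l K - 2 * Q3 n n K"
    unfolding compl Q3_def sum_3 by (simp add: algebra_simps)
  moreover have "(\<Sum>b\<in>UNIV. K b * (\<Sum>a\<in>UNIV. \<Sum>d\<in>UNIV. gi a d * Q d a b)) = 2 * sK"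
    unfolding CB by (simp add: sK_def sum_3 algebra_simps)
  ultimately have "Q3 n n K = 0" using a D1c[of l] by simp
  then show ?thesis using D2c[of n] phi unfolding \<phi>_def Pf_def by simp
qed

lemma final: assumes X: "gf K X = 0" and Y: "gf K Y = 0" shows "gf (Vf X) Y = 0"
proof -
  have zK: "gf (Vf u) K = 0" for u using T0[of u] gf_sym[of K "Vf u"] by simp
  have zn: "gf (Vf K) n = 0" "gf (Vf n) n = 0" using kappa rho gf_sym by auto
  have Yd: "Y = (\<lambda>a. gf l Y * K a + (- 2 * gf n Y) * n a)" by (rule vdec2[OF Y])
  have VX: "Vf X = (\<lambda>a. gf l X * Vf K a + (- 2 * gf n X) * Vf n a)"
    by (subst vdec2[OF X]) (rule Vf_lin)
  have "gf (Vf X) Y = gf l X * gf (Vf K) Y + (- 2 * gf n X) * gf (Vf n) Y"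
    unfolding VX by (rule gf_lin_l)
  also have "gf (Vf K) Y = 0" by (subst Yd, subst gf_lin_r) (simp add: zK zn)
  also have "gf (Vf n) Y = 0" by (subst Yd, subst gf_lin_r) (simp add: zK zn)
  finally show ?thesis by simp
qed

lemma final': "(\<Sum>a\<in>UNIV. \<Sum>b\<in>UNIV. g a b * X a * K b) = 0 \<Longrightarrow> (\<Sum>a\<in>UNIV. \<Sum>b\<in>UNIV. g a b * Y a * K b) = 0
  \<Longrightarrow> (\<Sum>c\<in>UNIV. \<Sum>a\<in>UNIV. \<Sum>b\<in>UNIV. X c * Lk c a * g a b * Y b) = 0"
proof -
  assume "(\<Sum>a\<in>UNIV. \<Sum>b\<in>UNIV. g a b * X a * K b) = 0" "(\<Sum>a\<in>UNIV. \<Sum>b\<in>UNIV. g a b * Y a * K b) = 0"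
  then have "gf X K = 0" "gf Y K = 0" by (simp_all add: gf_def)
  then have "gf (Vf X) Y = 0" using final gf_sym by metis
  moreover have "gf (Vf X) Y = (\<Sum>c\<in>UNIV. \<Sum>a\<in>UNIV. \<Sum>b\<in>UNIV. X c * Lk c a * g a b * Y b)"
    unfolding gf_def Vf_def sum_3 by (simp add: algebra_simps)
  ultimately show ?thesis by simp
qed

end
end

lemma order2_coeffs:
  fixes p :: "complex poly"
  assumes p: "p \<noteq> 0" and o: "order 0 p = 2"
  shows "coeff p 0 = 0" "coeff p 1 = 0" "coeff p 2 \<noteq> 0"
proof -
  have x: "[:0, 1:] = (monom 1 1 :: complex poly)" by (simp add: monom_Suc)
  have "[:-0, 1:] ^ 2 dvd p" using order_divides[of 0 2 p] o by simp
  moreover have "[:-0, 1:] ^ 2 = (monom 1 2 :: complex poly)" unfolding minus_zero x by (simp add: monom_power)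
  ultimately have "monom 1 2 dvd p" by simp
  then obtain q where q: "p = monom 1 2 * q" by (auto elim: dvdE)
  have c: "coeff p k = (if k < 2 then 0 else coeff q (k - 2))" for k
    unfolding q coeff_monom_mult by simp
  show "coeff p 0 = 0" "coeff p 1 = 0" using c by auto
  show "coeff p 2 \<noteq> 0"
  proof
    assume "coeff p 2 = 0"
    then have "poly q 0 = 0" using c[of 2] by (simp add: poly_0_coeff_0)
    then have "[:0, 1:] dvd q" using dvd_iff_poly_eq_0[of 0 q] by simp
    then obtain r where "q = [:0, 1:] * r" by (auto elim: dvdE)
    moreover have "[:-0, 1:] ^ 3 = (monom 1 2 * [:0, 1:] :: complex poly)" unfolding minus_zero x by (simp add: monom_power mult_monom)
    ultimately have "p = [:-0, 1:] ^ 3 * r" unfolding q by (simp add: mult.assoc)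
    then have "[:-0, 1:] ^ 3 dvd p" by simp
    then have "3 \<le> order 0 p" using order_divides[of 0 3 p] p by simp
    then show False using o by simp
  qed
qed


definition "gcf (Gr::real^3^3) (u::complex^3) v = (\<Sum>a\<in>UNIV. \<Sum>b\<in>UNIV. complex_of_real (Gr $ a $ b) * u $ a * v $ b)"

lemma frame_compl:
  fixes Gr Gi :: "real^3^3" and K l n :: "complex^3"
  assumes sym: "\<And>a b. Gr $ a $ b = Gr $ b $ a"
    and inv: "\<And>a c. (\<Sum>b\<in>UNIV. Gr $ a $ b * Gi $ b $ c) = (if a = c then 1 else 0)"
    and h: "gcf Gr K l = 1" "gcf Gr n n = -1/2" "gcf Gr K K = 0" "gcf Gr l l = 0" "gcf Gr K n = 0" "gcf Gr l n = 0"
  shows "complex_of_real (Gi $ a $ b) = K $ a * l $ b + l $ a * K $ b - 2 * n $ a * n $ b"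
proof -
  define Gc :: "complex^3^3" where "Gc = (\<chi> a b. complex_of_real (Gr $ a $ b))"
  define Gic :: "complex^3^3" where "Gic = (\<chi> a b. complex_of_real (Gi $ a $ b))"
  define col :: "3 \<Rightarrow> complex^3" where "col i = (if i = 1 then K else if i = 2 then l else n)" for i
  define M :: "complex^3^3" where "M = (\<chi> a i. col i $ a)"
  define Fi :: "complex^3^3" where "Fi = (\<chi> i j. if (i = 1 \<and> j = 2) \<or> (i = 2 \<and> j = 1) then 1 else if i = 3 \<and> j = 3 then -2 else 0)"
  have gsym: "gcf Gr u v = gcf Gr v u" for u v
    unfolding gcf_def sum_3 by (simp add: sym algebra_simps)
  have F: "(transpose M ** Gc ** M) $ i $ j = gcf Gr (col i) (col j)" for i j
    unfolding gcf_def matrix_matrix_mult_def transpose_def M_def Gc_def sum_3 by (simp add: algebra_simps)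
  have FFi: "(transpose M ** Gc ** M) ** Fi = mat 1"
  proof -
    have all: "\<forall>i j. (\<Sum>k\<in>UNIV. gcf Gr (col i) (col k) * Fi $ k $ j) = mat 1 $ i $ j"
      unfolding forall_3 sum_3 Fi_def col_def mat_def
      by (simp add: h gsym[of l K] gsym[of n K] gsym[of n l])
    have "((transpose M ** Gc ** M) ** Fi) $ i $ j = mat 1 $ i $ j" for i j
    proof -
      have "((transpose M ** Gc ** M) ** Fi) $ i $ j = (\<Sum>k\<in>UNIV. gcf Gr (col i) (col k) * Fi $ k $ j)"
        unfolding matrix_matrix_mult_def[of "transpose M ** Gc ** M"] by (simp add: F)
      also have "\<dots> = mat 1 $ i $ j" using all by blast
      finally show ?thesis .
    qed
    then show ?thesis by (simp add: vec_eq_iff)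
  qed
  have "(transpose M ** Gc) ** (M ** Fi) = mat 1" using FFi by (simp add: matrix_mul_assoc)
  then have "(M ** Fi) ** (transpose M ** Gc) = mat 1" using matrix_left_right_inverse by blast
  then have HG: "(M ** Fi ** transpose M) ** Gc = mat 1" by (simp add: matrix_mul_assoc)
  have GG: "Gc ** Gic = mat 1"
  proof -
    have "(Gc ** Gic) $ a $ c = mat 1 $ a $ c" for a c
    proof -
      have "(Gc ** Gic) $ a $ c = complex_of_real (\<Sum>b\<in>UNIV. Gr $ a $ b * Gi $ b $ c)"
        unfolding matrix_matrix_mult_def Gc_def Gic_def by simp
      then show ?thesis unfolding inv mat_def by simp
    qed
    then show ?thesis by (simp add: vec_eq_iff)
  qed
  have "M ** Fi ** transpose M = (M ** Fi ** transpose M) ** (Gc ** Gic)" by (simp add: GG matrix_mul_rid)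
  also have "\<dots> = ((M ** Fi ** transpose M) ** Gc) ** Gic" by (rule matrix_mul_assoc)
  also have "\<dots> = Gic" unfolding HG by (rule matrix_mul_lid)
  finally have "Gic $ a $ b = (M ** Fi ** transpose M) $ a $ b" by simp
  also have "\<dots> = K $ a * l $ b + l $ a * K $ b - 2 * n $ a * n $ b"
    unfolding matrix_matrix_mult_def transpose_def M_def Fi_def col_def sum_3 by (simp add: algebra_simps)
  finally show ?thesis by (simp add: Gic_def)
qed


lemma differentiable_of_real' [simp]:
  "f differentiable (at x) \<Longrightarrow> (\<lambda>y. of_real (f y) :: 'b::real_normed_algebra_1) differentiable (at x)"
  unfolding differentiable_def using bounded_linear.has_derivative[OF bounded_linear_of_real] by blast

context
  fixes U G k x
  assumes SM: "smooth_metric U G" and NG: "null_generator U G k" and x: "x \<in> U"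
begin

lemma dfk: "y \<in> U \<Longrightarrow> (\<lambda>z. k z $ a) differentiable (at y)"
  using NG smooth_diffble unfolding null_generator_def smooth_field_def by blast

definition "Lk c a = pd c (\<lambda>y. k y $ a) x + (\<Sum>b\<in>UNIV. complex_of_real (christ G a c b x) * k x $ b)"

lemma D3: "(\<Sum>a\<in>UNIV. \<Sum>b\<in>UNIV. complex_of_real (G x $ a $ b) * k x $ a * Lk c b) = 0"
proof -
  have "pd c (\<lambda>y. gc G y (k y) (k y)) x = pd c (\<lambda>y. 0) x"
    by (rule pd_cong[OF oU[OF SM] x]) (use NG in \<open>simp add: null_generator_def\<close>)
  then have "pd c (\<lambda>y. \<Sum>a\<in>UNIV. \<Sum>b\<in>UNIV. complex_of_real (G y $ a $ b) * k y $ a * k y $ b) x = 0"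
    by (simp add: gc_def pd_const)
  moreover have "pd c (\<lambda>y. \<Sum>a\<in>UNIV. \<Sum>b\<in>UNIV. complex_of_real (G y $ a $ b) * k y $ a * k y $ b) x
     = 2 * (\<Sum>a\<in>UNIV. \<Sum>b\<in>UNIV. complex_of_real (G x $ a $ b) * k x $ a * Lk c b)"
    using x by (simp add: pd_rules pd_of_real dfs[OF SM] dfk compat[OF SM x] Lk_def sum_3 algebra_simps
      christ_sym[OF SM x] G_sym[OF SM x])
  ultimately show ?thesis by simp
qed


lemma Phi_sym: "y \<in> U \<Longrightarrow> Phi G a b y = Phi G b a y"
  unfolding Phi_def using ricci_sym[OF SM] G_sym[OF SM] by metis

lemma tr_real: assumes y: "y \<in> U" shows "(\<Sum>a\<in>UNIV. \<Sum>b\<in>UNIV. ginv G y $ a $ b * Phi G a b y) = 0"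
proof -
  have one: "(\<Sum>b\<in>UNIV. ginv G y $ a $ b * G y $ a $ b) = 1" for a
    using ginv_G[OF SM y, of a a] by (simp add: G_sym[OF SM y, of a])
  have "(\<Sum>a\<in>UNIV. \<Sum>b\<in>UNIV. ginv G y $ a $ b * Phi G a b y)
      = (\<Sum>a\<in>UNIV. \<Sum>b\<in>UNIV. ginv G y $ a $ b * ricci G a b y) - (1/3) * scal G y * (\<Sum>a\<in>UNIV. \<Sum>b\<in>UNIV. ginv G y $ a $ b * G y $ a $ b)"
    unfolding Phi_def by (simp add: right_diff_distrib sum_subtractf sum_distrib_left mult_ac)
  moreover have "(\<Sum>a\<in>UNIV. \<Sum>b\<in>UNIV. ginv G y $ a $ b * ricci G a b y) = scal G y" by (simp add: scal_def)
  moreover have "(\<Sum>a\<in>UNIV. \<Sum>b\<in>UNIV. ginv G y $ a $ b * G y $ a $ b) = 3" unfolding one by (simp add: sum_3)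
  ultimately show ?thesis by simp
qed

lemma frame_facts:
  assumes y: "y \<in> U" and pm: "principal_mult G y (k y) 2"
  shows "\<exists>l n. (\<forall>a b. complex_of_real (ginv G y $ a $ b) = k y $ a * l $ b + l $ a * k y $ b - 2 * n $ a * n $ b)
     \<and> gc G y (k y) l = 1 \<and> gc G y n n = -1/2 \<and> gc G y (k y) (k y) = 0 \<and> gc G y l l = 0
     \<and> gc G y (k y) n = 0 \<and> gc G y l n = 0
     \<and> Phic G y (k y) (k y) = 0 \<and> Phic G y (k y) n = 0 \<and> Phic G y (k y) l \<noteq> 0"
proof -
  from pm obtain l n where nf: "null_frame G y (k y) l n" and p0: "phi_poly G y (k y) l n \<noteq> 0"
    and o: "order 0 (phi_poly G y (k y) l n) = 2"
    unfolding principal_mult_def by blast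
  note c = order2_coeffs[OF p0 o]
  have P: "Phic G y (k y) (k y) = 0" "Phic G y (k y) n = 0" "Phic G y (k y) l \<noteq> 0"
    using c unfolding phi_poly_def by (auto simp: numeral_2_eq_2)
  have gg: "gc G y u v = gcf (G y) u v" for u v by (simp add: gc_def gcf_def)
  have cm: "complex_of_real (ginv G y $ a $ b) = k y $ a * l $ b + l $ a * k y $ b - 2 * n $ a * n $ b" for a b
    by (rule frame_compl[OF G_sym[OF SM y] G_ginv[OF SM y]])
       (use nf in \<open>simp_all add: null_frame_def gg[symmetric]\<close>)
  show ?thesis using cm nf P unfolding null_frame_def by blast
qed

lemma W_zero: assumes y: "y \<in> U" and pm: "principal_mult G y (k y) 2"
  shows "(\<Sum>d\<in>UNIV. complex_of_real (G y $ a $ d) * k y $ d) * (\<Sum>c\<in>UNIV. complex_of_real (Phi G b c y) * k y $ c)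
       - (\<Sum>d\<in>UNIV. complex_of_real (G y $ b $ d) * k y $ d) * (\<Sum>c\<in>UNIV. complex_of_real (Phi G a c y) * k y $ c) = 0"
proof -
  obtain l n where F: "\<forall>a b. complex_of_real (ginv G y $ a $ b) = k y $ a * l $ b + l $ a * k y $ b - 2 * n $ a * n $ b"
     "gc G y (k y) l = 1" "gc G y n n = -1/2" "gc G y (k y) (k y) = 0" "gc G y l l = 0"
     "gc G y (k y) n = 0" "gc G y l n = 0"
     "Phic G y (k y) (k y) = 0" "Phic G y (k y) n = 0" "Phic G y (k y) l \<noteq> 0"
    using frame_facts[OF y pm] by blast
  show ?thesis
  proof (rule W0[where g="\<lambda>a b. complex_of_real (G y $ a $ b)" and gi="\<lambda>a b. complex_of_real (ginv G y $ a $ b)"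
      and P="\<lambda>a b. complex_of_real (Phi G a b y)" and K="\<lambda>a. k y $ a" and l="\<lambda>a. l $ a" and n="\<lambda>a. n $ a"])
    show "\<And>a b. complex_of_real (G y $ a $ b) = complex_of_real (G y $ b $ a)" using G_sym[OF SM y] by simp
    show "\<And>a b. complex_of_real (Phi G a b y) = complex_of_real (Phi G b a y)" using Phi_sym[OF y] by simp
    show "\<And>a c. (\<Sum>b\<in>UNIV. complex_of_real (G y $ a $ b) * complex_of_real (ginv G y $ b $ c)) = (if a = c then 1 else 0)"
      using G_ginv[OF SM y] by (simp flip: of_real_mult of_real_sum)
    show "\<And>a c. (\<Sum>b\<in>UNIV. complex_of_real (ginv G y $ a $ b) * complex_of_real (G y $ b $ c)) = (if a = c then 1 else 0)"
      using ginv_G[OF SM y] by (simp flip: of_real_mult of_real_sum)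
    show "\<And>a b. complex_of_real (ginv G y $ a $ b) = k y $ a * l $ b + l $ a * k y $ b - 2 * n $ a * n $ b"
      using F(1) by blast
    show "(\<Sum>a\<in>UNIV. \<Sum>b\<in>UNIV. complex_of_real (ginv G y $ a $ b) * complex_of_real (Phi G a b y)) = 0"
      using tr_real[OF y] by (simp flip: of_real_mult of_real_sum)
  qed (use F in \<open>simp_all add: gc_def Phic_def\<close>)
qed


lemma dPhi_nabla: "pd c (Phi G a b) x = nablaPhi G c a b x + (\<Sum>e\<in>UNIV. christ G e c a x * Phi G e b x) + (\<Sum>e\<in>UNIV. christ G e c b x * Phi G a e x)"
  by (simp add: nablaPhi_def)

lemma covW_alg:
  fixes \<Gamma> :: "3\<Rightarrow>3\<Rightarrow>3\<Rightarrow>complex" and A B nA nB :: "3 \<Rightarrow> complex"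
  shows "(nA a + (\<Sum>f\<in>UNIV. \<Gamma> f e a * A f)) * B b + A a * (nB b + (\<Sum>f\<in>UNIV. \<Gamma> f e b * B f))
     - ((nA b + (\<Sum>f\<in>UNIV. \<Gamma> f e b * A f)) * B a + A b * (nB a + (\<Sum>f\<in>UNIV. \<Gamma> f e a * B f)))
   = (nA a * B b + A a * nB b - (nA b * B a + A b * nB a))
     + (\<Sum>f\<in>UNIV. \<Gamma> f e a * (A f * B b - A b * B f)) + (\<Sum>f\<in>UNIV. \<Gamma> f e b * (A a * B f - A f * B a))"
  unfolding sum_3 by (simp add: algebra_simps)

context
  assumes PM: "\<forall>y\<in>U. principal_mult G y (k y) 2"
begin

lemma Phic_zero: "y \<in> U \<Longrightarrow> Phic G y (k y) (k y) = 0"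
  using frame_facts PM by blast

lemma D1: "(\<Sum>a\<in>UNIV. \<Sum>b\<in>UNIV. complex_of_real (nablaPhi G c a b x) * k x $ a * k x $ b)
   + 2 * (\<Sum>a\<in>UNIV. \<Sum>b\<in>UNIV. complex_of_real (Phi G a b x) * Lk c a * k x $ b) = 0"
proof -
  have "pd c (\<lambda>y. Phic G y (k y) (k y)) x = pd c (\<lambda>y. 0) x"
    by (rule pd_cong[OF oU[OF SM] x]) (rule Phic_zero)
  then have "pd c (\<lambda>y. \<Sum>a\<in>UNIV. \<Sum>b\<in>UNIV. complex_of_real (Phi G a b y) * k y $ a * k y $ b) x = 0"
    by (simp add: Phic_def pd_const)
  moreover have "pd c (\<lambda>y. \<Sum>a\<in>UNIV. \<Sum>b\<in>UNIV. complex_of_real (Phi G a b y) * k y $ a * k y $ b) x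
     = (\<Sum>a\<in>UNIV. \<Sum>b\<in>UNIV. complex_of_real (nablaPhi G c a b x) * k x $ a * k x $ b)
   + 2 * (\<Sum>a\<in>UNIV. \<Sum>b\<in>UNIV. complex_of_real (Phi G a b x) * Lk c a * k x $ b)"
    using x by (simp add: pd_rules pd_of_real dfs[OF SM] dfk dPhi_nabla Lk_def sum_3 algebra_simps
      christ_sym[OF SM x] Phi_sym[OF x])
  ultimately show ?thesis by simp
qed

lemma D2: "(\<Sum>d\<in>UNIV. complex_of_real (G x $ a $ d) * Lk e d) * (\<Sum>c\<in>UNIV. complex_of_real (Phi G b c x) * k x $ c)
   + (\<Sum>d\<in>UNIV. complex_of_real (G x $ a $ d) * k x $ d) * (\<Sum>c\<in>UNIV. complex_of_real (nablaPhi G e b c x) * k x $ c)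
   + (\<Sum>d\<in>UNIV. complex_of_real (G x $ a $ d) * k x $ d) * (\<Sum>c\<in>UNIV. complex_of_real (Phi G b c x) * Lk e c)
   - ((\<Sum>d\<in>UNIV. complex_of_real (G x $ b $ d) * Lk e d) * (\<Sum>c\<in>UNIV. complex_of_real (Phi G a c x) * k x $ c)
   + (\<Sum>d\<in>UNIV. complex_of_real (G x $ b $ d) * k x $ d) * (\<Sum>c\<in>UNIV. complex_of_real (nablaPhi G e a c x) * k x $ c)
   + (\<Sum>d\<in>UNIV. complex_of_real (G x $ b $ d) * k x $ d) * (\<Sum>c\<in>UNIV. complex_of_real (Phi G a c x) * Lk e c)) = 0"
proof -
  define A where "A y a = (\<Sum>d\<in>UNIV. complex_of_real (G y $ a $ d) * k y $ d)" for y a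
  define B where "B y b = (\<Sum>c\<in>UNIV. complex_of_real (Phi G b c y) * k y $ c)" for y b
  define nA where "nA a = (\<Sum>d\<in>UNIV. complex_of_real (G x $ a $ d) * Lk e d)" for a
  define nB where "nB b = (\<Sum>c\<in>UNIV. complex_of_real (nablaPhi G e b c x) * k x $ c) + (\<Sum>c\<in>UNIV. complex_of_real (Phi G b c x) * Lk e c)" for b
  have W: "A y a * B y b - A y b * B y a = 0" if "y \<in> U" for y a b
    unfolding A_def B_def using W_zero[OF that] PM that by blast
  have dA: "pd e (\<lambda>y. A y a) x = nA a + (\<Sum>f\<in>UNIV. complex_of_real (christ G f e a x) * A x f)" for a
    unfolding A_def nA_def using x
    by (simp add: pd_rules pd_of_real dfs[OF SM] dfk compat[OF SM x] Lk_def sum_3 algebra_simps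
      christ_sym[OF SM x] G_sym[OF SM x])
  have dB: "pd e (\<lambda>y. B y b) x = nB b + (\<Sum>f\<in>UNIV. complex_of_real (christ G f e b x) * B x f)" for b
    unfolding B_def nB_def using x
    by (simp add: pd_rules pd_of_real dfs[OF SM] dfk dPhi_nabla Lk_def sum_3 algebra_simps
      christ_sym[OF SM x] Phi_sym[OF x])
  have dfA: "(\<lambda>y. A y a) differentiable (at x)" for a unfolding A_def using x by (simp add: dfs[OF SM] dfk)
  have dfB: "(\<lambda>y. B y b) differentiable (at x)" for b unfolding B_def using x by (simp add: dfs[OF SM] dfk)
  have "pd e (\<lambda>y. A y a * B y b - A y b * B y a) x = pd e (\<lambda>y. 0) x"
    by (rule pd_cong[OF oU[OF SM] x]) (rule W)
  then have "pd e (\<lambda>y. A y a) x * B x b + A x a * pd e (\<lambda>y. B y b) x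
      - (pd e (\<lambda>y. A y b) x * B x a + A x b * pd e (\<lambda>y. B y a) x) = 0"
    by (simp add: pd_diff pd_mult dfA dfB pd_const algebra_simps)
  then have "(nA a * B x b + A x a * nB b - (nA b * B x a + A x b * nB a))
     + (\<Sum>f\<in>UNIV. complex_of_real (christ G f e a x) * (A x f * B x b - A x b * B x f))
     + (\<Sum>f\<in>UNIV. complex_of_real (christ G f e b x) * (A x a * B x f - A x f * B x a)) = 0"
    using covW_alg[where \<Gamma>="\<lambda>c a b. complex_of_real (christ G c a b x)" and A="A x" and B="B x" and nA=nA and nB=nB and a=a and b=b and e=e]
    unfolding dA dB by simp
  then have "nA a * B x b + A x a * nB b - (nA b * B x a + A x b * nB a) = 0"
    using W[OF x] by simp
  then show ?thesis unfolding nA_def nB_def A_def B_def by (simp add: algebra_simps)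
qed


lemma T_zero:
  assumes A4x: "\<forall>c. (\<Sum>a\<in>UNIV. \<Sum>b\<in>UNIV. k x $ a * k x $ b *
            complex_of_real (cotton G a b c x + 3 * G x $ b $ c * pd a (Sfun G) x)) = 0"
    and XK: "gc G x Xv (k x) = 0" and YK: "gc G x Yv (k x) = 0"
  shows "(\<Sum>c\<in>UNIV. \<Sum>a\<in>UNIV. \<Sum>b\<in>UNIV. Xv $ c * Lk c a * complex_of_real (G x $ a $ b) * Yv $ b) = 0"
proof -
  obtain l n where F: "\<forall>a b. complex_of_real (ginv G x $ a $ b) = k x $ a * l $ b + l $ a * k x $ b - 2 * n $ a * n $ b"
     "gc G x (k x) l = 1" "gc G x n n = -1/2" "gc G x (k x) (k x) = 0" "gc G x l l = 0"
     "gc G x (k x) n = 0" "gc G x l n = 0"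
     "Phic G x (k x) (k x) = 0" "Phic G x (k x) n = 0" "Phic G x (k x) l \<noteq> 0"
    using frame_facts[OF x] PM x by blast
  have cot: "complex_of_real (cotton G a b c x + 3 * G x $ b $ c * pd a (Sfun G) x)
     = - (complex_of_real (nablaPhi G b c a x) - complex_of_real (nablaPhi G c b a x))
       + complex_of_real (G x $ a $ b) * complex_of_real (pd c (Sfun G) x)
       - complex_of_real (G x $ a $ c) * complex_of_real (pd b (Sfun G) x)
       + 3 * complex_of_real (G x $ b $ c) * complex_of_real (pd a (Sfun G) x)" for a b c
    by (simp add: cotton_def)
  show ?thesis
  proof (rule final'[where g="\<lambda>a b. complex_of_real (G x $ a $ b)" and gi="\<lambda>a b. complex_of_real (ginv G x $ a $ b)"
      and P="\<lambda>a b. complex_of_real (Phi G a b x)" and K="\<lambda>a. k x $ a" and l="\<lambda>a. l $ a" and n="\<lambda>a. n $ a"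
      and Q="\<lambda>d a b. complex_of_real (nablaPhi G d a b x)" and s="\<lambda>a. complex_of_real (pd a (Sfun G) x)"
      and Lk=Lk and X="\<lambda>a. Xv $ a" and Y="\<lambda>a. Yv $ a"])
    show "\<And>a b. complex_of_real (G x $ a $ b) = complex_of_real (G x $ b $ a)" using G_sym[OF SM x] by simp
    show "\<And>a b. complex_of_real (Phi G a b x) = complex_of_real (Phi G b a x)" using Phi_sym[OF x] by simp
    show "\<And>a c. (\<Sum>b\<in>UNIV. complex_of_real (G x $ a $ b) * complex_of_real (ginv G x $ b $ c)) = (if a = c then 1 else 0)"
      using G_ginv[OF SM x] by (simp flip: of_real_mult of_real_sum)
    show "\<And>a c. (\<Sum>b\<in>UNIV. complex_of_real (ginv G x $ a $ b) * complex_of_real (G x $ b $ c)) = (if a = c then 1 else 0)"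
      using ginv_G[OF SM x] by (simp flip: of_real_mult of_real_sum)
    show "\<And>a b. complex_of_real (ginv G x $ a $ b) = k x $ a * l $ b + l $ a * k x $ b - 2 * n $ a * n $ b"
      using F(1) by blast
    show "(\<Sum>a\<in>UNIV. \<Sum>b\<in>UNIV. complex_of_real (ginv G x $ a $ b) * complex_of_real (Phi G a b x)) = 0"
      using tr_real[OF x] by (simp flip: of_real_mult of_real_sum)
    show "\<And>c. (\<Sum>a\<in>UNIV. \<Sum>b\<in>UNIV. k x $ a * k x $ b * (- (complex_of_real (nablaPhi G b c a x) - complex_of_real (nablaPhi G c b a x))
       + complex_of_real (G x $ a $ b) * complex_of_real (pd c (Sfun G) x)
       - complex_of_real (G x $ a $ c) * complex_of_real (pd b (Sfun G) x)
       + 3 * complex_of_real (G x $ b $ c) * complex_of_real (pd a (Sfun G) x))) = 0"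
      using A4x unfolding cot by blast
    show "\<And>b. (\<Sum>a\<in>UNIV. \<Sum>d\<in>UNIV. complex_of_real (ginv G x $ a $ d) * complex_of_real (nablaPhi G d a b x)) = 2 * complex_of_real (pd b (Sfun G) x)"
    proof -
      fix b
      have "complex_of_real (\<Sum>a\<in>UNIV. \<Sum>d\<in>UNIV. ginv G x $ a $ d * nablaPhi G d a b x) = complex_of_real (2 * pd b (Sfun G) x)"
        using CB[OF SM x, of b] by simp
      then show "(\<Sum>a\<in>UNIV. \<Sum>d\<in>UNIV. complex_of_real (ginv G x $ a $ d) * complex_of_real (nablaPhi G d a b x)) = 2 * complex_of_real (pd b (Sfun G) x)"
        by simp
    qed
    show "\<And>c. (\<Sum>a\<in>UNIV. \<Sum>b\<in>UNIV. complex_of_real (nablaPhi G c a b x) * k x $ a * k x $ b)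
       + 2 * (\<Sum>a\<in>UNIV. \<Sum>b\<in>UNIV. complex_of_real (Phi G a b x) * Lk c a * k x $ b) = 0"
      by (rule D1)
    show "\<And>e a b. (\<Sum>d\<in>UNIV. complex_of_real (G x $ a $ d) * Lk e d) * (\<Sum>c\<in>UNIV. complex_of_real (Phi G b c x) * k x $ c)
   + (\<Sum>d\<in>UNIV. complex_of_real (G x $ a $ d) * k x $ d) * (\<Sum>c\<in>UNIV. complex_of_real (nablaPhi G e b c x) * k x $ c)
   + (\<Sum>d\<in>UNIV. complex_of_real (G x $ a $ d) * k x $ d) * (\<Sum>c\<in>UNIV. complex_of_real (Phi G b c x) * Lk e c)
   - ((\<Sum>d\<in>UNIV. complex_of_real (G x $ b $ d) * Lk e d) * (\<Sum>c\<in>UNIV. complex_of_real (Phi G a c x) * k x $ c)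
   + (\<Sum>d\<in>UNIV. complex_of_real (G x $ b $ d) * k x $ d) * (\<Sum>c\<in>UNIV. complex_of_real (nablaPhi G e a c x) * k x $ c)
   + (\<Sum>d\<in>UNIV. complex_of_real (G x $ b $ d) * k x $ d) * (\<Sum>c\<in>UNIV. complex_of_real (Phi G a c x) * Lk e c)) = 0"
      by (rule D2)
    show "\<And>c. (\<Sum>a\<in>UNIV. \<Sum>b\<in>UNIV. complex_of_real (G x $ a $ b) * k x $ a * Lk c b) = 0"
      by (rule D3)
  qed (use F XK YK in \<open>simp_all add: gc_def Phic_def\<close>)
qed

end


lemma covD_rel:
  assumes SY: "smooth_field U Y" and YK: "\<forall>y\<in>U. gc G y (Y y) (k y) = 0"
  shows "gc G x (covD G X Y x) (k x) + (\<Sum>c\<in>UNIV. \<Sum>a\<in>UNIV. \<Sum>b\<in>UNIV. X x $ c * Lk c a * complex_of_real (G x $ a $ b) * Y x $ b) = 0"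
proof -
  have dfY: "(\<lambda>z. Y z $ a) differentiable (at x)" for a
    using SY smooth_diffble x unfolding smooth_field_def by blast
  have z: "pd c (\<lambda>y. gc G y (Y y) (k y)) x = 0" for c
  proof -
    have "pd c (\<lambda>y. gc G y (Y y) (k y)) x = pd c (\<lambda>y. 0) x"
      by (rule pd_cong[OF oU[OF SM] x]) (use YK in auto)
    then show ?thesis by (simp add: pd_const)
  qed
  have "(\<Sum>c\<in>UNIV. X x $ c * pd c (\<lambda>y. \<Sum>a\<in>UNIV. \<Sum>b\<in>UNIV. complex_of_real (G y $ a $ b) * Y y $ a * k y $ b) x)
     = gc G x (covD G X Y x) (k x) + (\<Sum>c\<in>UNIV. \<Sum>a\<in>UNIV. \<Sum>b\<in>UNIV. X x $ c * Lk c a * complex_of_real (G x $ a $ b) * Y x $ b)"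
    using x by (simp add: pd_rules pd_of_real dfs[OF SM] dfk dfY compat[OF SM x] Lk_def gc_def covD_def sum_3 algebra_simps
      christ_sym[OF SM x] G_sym[OF SM x])
  moreover have "(\<Sum>c\<in>UNIV. X x $ c * pd c (\<lambda>y. \<Sum>a\<in>UNIV. \<Sum>b\<in>UNIV. complex_of_real (G y $ a $ b) * Y y $ a * k y $ b) x) = 0"
    using z by (simp add: gc_def)
  ultimately show ?thesis by simp
qed

end

theorem mainTheorem4:
  fixes U :: "(real^3) set" and G :: "real^3 \<Rightarrow> real^3^3" and k :: "real^3 \<Rightarrow> complex^3"
  assumes "smooth_metric U G"
    and "null_generator U G k"
    and "\<forall>x\<in>U. principal_mult G x (k x) 2"
    and "\<forall>x\<in>U. \<forall>c. (\<Sum>a\<in>UNIV. \<Sum>b\<in>UNIV. k x $ a * k x $ b *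
            complex_of_real (cotton G a b c x + 3 * G x $ b $ c * pd a (Sfun G) x)) = 0"
  shows "co_geodetic U G k"
  unfolding co_geodetic_def
proof (intro allI impI ballI)
  fix X Y Z x
  assume H: "smooth_field U X \<and> smooth_field U Y \<and> smooth_field U Z \<and>
      (\<forall>x\<in>U. gc G x (X x) (k x) = 0 \<and> gc G x (Y x) (k x) = 0 \<and> (\<exists>c. Z x = c *s k x))"
    and x: "x \<in> U"
  obtain c where Zc: "Z x = c *s k x" using H x by blast
  have YK: "\<forall>y\<in>U. gc G y (Y y) (k y) = 0" using H by blast
  have r: "gc G x (covD G X Y x) (k x) + (\<Sum>c\<in>UNIV. \<Sum>a\<in>UNIV. \<Sum>b\<in>UNIV. X x $ c * Lk G k x c a * complex_of_real (G x $ a $ b) * Y x $ b) = 0"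
    by (rule covD_rel[OF assms(1,2) x]) (use H YK in auto)
  have T: "(\<Sum>c\<in>UNIV. \<Sum>a\<in>UNIV. \<Sum>b\<in>UNIV. X x $ c * Lk G k x c a * complex_of_real (G x $ a $ b) * Y x $ b) = 0"
    by (rule T_zero[OF assms(1,2) x assms(3)]) (use assms(4) H x in auto)
  have g0: "gc G x (covD G X Y x) (k x) = 0" using r T by simp
  have "gc G x (covD G X Y x) (Z x) = c * gc G x (covD G X Y x) (k x)"
    unfolding Zc gc_def sum_3 by (simp add: algebra_simps)
  then show "gc G x (covD G X Y x) (Z x) = 0" using g0 by simp
qed


end
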